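(* Let $\mathcal S$ carry a $\sigma$-finite measure $\lambda$ and let $\{P_\xi:\xi\in\Xi\}$ be transition kernels with densities $P_\xi(ds'\mid s,a)=p_\xi(s'\mid s,a)\lambda(ds')$, $0\le p_\xi\le M$. Let $\Phi=\{(\mu,\Sigma):\mu\in\tilde\Xi,\ 0\preceq\Sigma\preceq\sigma_{\max}I\}$ with $\tilde\Xi\subset\mathbb R^d$ compact, and suppose there is $c>0$ with $q_\phi(s'\mid s,a)\ge c$ for every transition $(s,a,s')$ in the dataset and every $\phi\in\Phi$. Suppose that for every transition $x=(s,a,s')$: (1) $\xi\mapsto p_\xi(s'\mid s,a)$ is twice continuously differentiable; (2) there are constants $G_1,G_2>0$ with $|\nabla_\xi p_\xi(s'\mid s,a)|\le G_1$ and $|\nabla_\xi^2p_\xi(s'\mid s,a)|\le G_2$. Then for all such transitions $x$ and all $\phi,\psi\in\Phi$, $|a(x,\phi)-a(x,\psi)|\le L\|\phi-\psi\|_2$ with $L=\dfrac{G_1+G_2/2}{c}$.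
   Context: For $\phi=(\mu,\Sigma)$, $P_\phi=\mathcal N(\mu,\Sigma)$ (degenerate allowed), $q_\phi(s'\mid s,a)=\int p_\xi(s'\mid s,a)\,P_\phi(d\xi)$, and $a(x,\phi)=\log q_\phi(s'\mid s,a)$ for $x=(s,a,s')$. Here $p_\xi$ is defined for $\xi\in\mathbb R^d$ so that the Gaussian mixtures make sense. *)

theory Defs
  imports "HOL-Probability.Probability"
begin

definition std_gauss :: "(real^'d::finite) measure" where
  "std_gauss = density lborel
     (\<lambda>z. ennreal ((2 * pi) powr (- real CARD('d) / 2) * exp (- (norm z)\<^sup>2 / 2)))"

text \<open>Gaussian N(mu, Sigma), degenerate Sigma allowed: law of mu + A z with z standard
  normal and A A^T = Sigma (for positive semidefinite Sigma such A exists, and the law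
  does not depend on the choice of A).\<close>
definition gauss :: "real^'d::finite \<Rightarrow> real^'d^'d \<Rightarrow> (real^'d) measure" where
  "gauss mu Sig = distr (std_gauss :: (real^'d) measure) borel
     (\<lambda>z. mu + (SOME A. A ** transpose A = Sig) *v z)"

definition Phi :: "(real^'d::finite) set \<Rightarrow> real \<Rightarrow> ((real^'d) \<times> (real^'d^'d)) set" where
  "Phi Xi smax = {(mu, Sig). mu \<in> Xi \<and> transpose Sig = Sig \<and>
      (\<forall>v. 0 \<le> v \<bullet> (Sig *v v) \<and> v \<bullet> (Sig *v v) \<le> smax * (v \<bullet> v))}"

definition qmix :: "(real^'d::finite \<Rightarrow> 's \<Rightarrow> 'a \<Rightarrow> 's \<Rightarrow> real) \<Rightarrow>
    (real^'d) \<times> (real^'d^'d) \<Rightarrow> 's \<Rightarrow> 'a \<Rightarrow> 's \<Rightarrow> real" where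
  "qmix p phi s a s' = (\<integral>xi. p xi s a s' \<partial>(gauss (fst phi) (snd phi)))"

definition loglik :: "(real^'d::finite \<Rightarrow> 's \<Rightarrow> 'a \<Rightarrow> 's \<Rightarrow> real) \<Rightarrow>
    's \<times> 'a \<times> 's \<Rightarrow> (real^'d) \<times> (real^'d^'d) \<Rightarrow> real" where
  "loglik p x phi = (case x of (s, a, s') \<Rightarrow> ln (qmix p phi s a s'))"

end

theory Submission
  imports Defs
begin



lemma nd_prod_nn:
  fixes \<sigma>::real assumes "\<sigma> > 0"
  shows "(\<integral>\<^sup>+x. ennreal (\<Prod>b\<in>Basis. normal_density 0 \<sigma> (x \<bullet> b)) \<partial>(lborel::'a::euclidean_space measure)) = 1"
proof -
  have "(\<integral>\<^sup>+x. ennreal (\<Prod>b\<in>Basis. normal_density 0 \<sigma> (x \<bullet> b)) \<partial>(lborel::'a measure))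
     = (\<integral>\<^sup>+x. (\<Prod>b\<in>Basis. ennreal (normal_density 0 \<sigma> (x \<bullet> b))) \<partial>(lborel::'a measure))"
    by (simp add: prod_ennreal)
  also have "\<dots> = (\<Prod>b\<in>(Basis::'a set). \<integral>\<^sup>+y. ennreal (normal_density 0 \<sigma> y) \<partial>lborel)"
    by (rule nn_integral_lborel_prod) auto
  also have "(\<integral>\<^sup>+y. ennreal (normal_density 0 \<sigma> y) \<partial>lborel) = 1"
    using assms by (subst nn_integral_eq_integral) auto
  finally show ?thesis by simp
qed

lemma norm_sq_basis: "(norm (x::'a::euclidean_space))\<^sup>2 = (\<Sum>b\<in>Basis. (x \<bullet> b)\<^sup>2)"
  unfolding power2_norm_eq_inner by (simp add: euclidean_inner[of x x] power2_eq_square)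

lemma nd_prod_eq:
  fixes \<sigma>::real assumes "\<sigma> > 0"
  shows "(\<Prod>b\<in>Basis. normal_density 0 \<sigma> ((x::'a::euclidean_space) \<bullet> b))
     = (1 / sqrt (2 * pi * \<sigma>\<^sup>2)) ^ DIM('a) * exp (- (norm x)\<^sup>2 / (2 * \<sigma>\<^sup>2))"
proof -
  have "(\<Prod>b\<in>Basis. normal_density 0 \<sigma> (x \<bullet> b))
      = (\<Prod>b\<in>(Basis::'a set). (1 / sqrt (2 * pi * \<sigma>\<^sup>2)) * exp (- (x \<bullet> b)\<^sup>2 / (2 * \<sigma>\<^sup>2)))"
    by (simp add: normal_density_def)
  also have "\<dots> = (1 / sqrt (2 * pi * \<sigma>\<^sup>2)) ^ DIM('a) * (\<Prod>b\<in>(Basis::'a set). exp (- (x \<bullet> b)\<^sup>2 / (2 * \<sigma>\<^sup>2)))"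
    by (subst prod.distrib) simp
  also have "(\<Prod>b\<in>(Basis::'a set). exp (- (x \<bullet> b)\<^sup>2 / (2 * \<sigma>\<^sup>2))) = exp (\<Sum>b\<in>(Basis::'a set). - (x \<bullet> b)\<^sup>2 / (2 * \<sigma>\<^sup>2))"
    by (simp add: exp_sum)
  also have "(\<Sum>b\<in>(Basis::'a set). - (x \<bullet> b)\<^sup>2 / (2 * \<sigma>\<^sup>2)) = - (norm x)\<^sup>2 / (2 * \<sigma>\<^sup>2)"
    by (simp add: norm_sq_basis sum_divide_distrib sum_negf)
  finally show ?thesis .
qed

definition gd :: "real^'d::finite \<Rightarrow> real" where
  "gd z = (2 * pi) powr (- real CARD('d) / 2) * exp (- (norm z)\<^sup>2 / 2)"

lemma gd_nonneg: "0 \<le> gd z" by (simp add: gd_def)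

lemma gd_eq_prod: "gd (z::real^'d::finite) = (\<Prod>b\<in>Basis. normal_density 0 1 (z \<bullet> b))"
proof -
  have "(1 / sqrt (2 * pi * 1\<^sup>2)) ^ DIM(real^'d) = (2 * pi) powr (- real CARD('d) / 2)"
    by (simp add: powr_minus_divide powr_realpow[symmetric] powr_half_sqrt[symmetric] powr_powr
        divide_simps powr_divide)
  then show ?thesis using nd_prod_eq[of 1 z] by (simp add: gd_def)
qed

lemma std_gauss_eq: "std_gauss = density lborel (\<lambda>z. ennreal (gd z))"
  by (simp add: std_gauss_def gd_def)

lemma gd_borel[measurable]: "gd \<in> borel_measurable borel"
  unfolding gd_def[abs_def] by measurable

lemma prob_std_gauss: "prob_space (std_gauss :: (real^'d::finite) measure)"
proof
  have "emeasure (std_gauss :: (real^'d) measure) (space std_gauss) = (\<integral>\<^sup>+z. ennreal (gd z) \<partial>(lborel::(real^'d) measure))"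
    by (simp add: std_gauss_eq emeasure_density)
  also have "\<dots> = 1" unfolding gd_eq_prod by (rule nd_prod_nn) simp
  finally show "emeasure (std_gauss :: (real^'d) measure) (space std_gauss) = 1" .
qed

lemma sets_std_gauss[simp, measurable_cong]: "sets std_gauss = sets borel"
  by (simp add: std_gauss_def)

lemma space_std_gauss[simp]: "space std_gauss = UNIV"
  by (simp add: std_gauss_def)

lemma integrable_exp_sq:
  fixes a :: real assumes "a > 0"
  shows "integrable (lborel::(real^'d::finite) measure) (\<lambda>x. exp (- a * (norm x)\<^sup>2))"
proof -
  define \<sigma> where "\<sigma> = sqrt (1 / (2 * a))"
  have s: "\<sigma> > 0" using assms by (simp add: \<sigma>_def)
  have s2: "2 * \<sigma>\<^sup>2 = 1 / a" using assms by (simp add: \<sigma>_def)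
  define C where "C = (1 / sqrt (2 * pi * \<sigma>\<^sup>2)) ^ DIM(real^'d)"
  have C: "C > 0" using s by (simp add: C_def)
  have e: "- (norm x)\<^sup>2 / (2 * \<sigma>\<^sup>2) = - a * (norm x)\<^sup>2" for x :: "real^'d"
    unfolding s2 by simp
  have eq: "exp (- a * (norm x)\<^sup>2) = (\<Prod>b\<in>Basis. normal_density 0 \<sigma> (x \<bullet> b)) / C" for x :: "real^'d"
    using nd_prod_eq[OF s, of x] C s unfolding e by (simp add: C_def)
  have "integrable (lborel::(real^'d) measure) (\<lambda>x. (\<Prod>b\<in>Basis. normal_density 0 \<sigma> (x \<bullet> b)))"
    by (rule integrableI_nonneg) (auto simp: nd_prod_nn[OF s] prod_nonneg)
  then show ?thesis unfolding eq by simp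
qed




lemma mvt_bound:
  fixes f f' :: "real \<Rightarrow> real"
  assumes "\<And>r. \<bar>r - t\<bar> < \<delta> \<Longrightarrow> (f has_real_derivative f' r) (at r)"
    and "\<And>r. \<bar>r - t\<bar> < \<delta> \<Longrightarrow> \<bar>f' r\<bar> \<le> B"
    and "\<bar>s - t\<bar> < \<delta>"
  shows "\<bar>f s - f t\<bar> \<le> \<bar>s - t\<bar> * B"
proof (cases s t rule: linorder_cases)
  case less
  then obtain z where z: "s < z" "z < t" "f t - f s = (t - s) * f' z"
    using MVT2[of s t f f'] assms by fastforce
  have "\<bar>f' z\<bar> \<le> B" using assms z less by auto
  moreover have "\<bar>f s - f t\<bar> = (t - s) * \<bar>f' z\<bar>" using z less
    by (metis abs_minus_commute abs_mult abs_of_pos diff_gt_0_iff_gt)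
  ultimately show ?thesis using less by (simp add: mult_left_mono abs_minus_commute)
next
  case greater
  then obtain z where z: "t < z" "z < s" "f s - f t = (s - t) * f' z"
    using MVT2[of t s f f'] assms by fastforce
  have "\<bar>f' z\<bar> \<le> B" using assms z greater by auto
  then show ?thesis using z greater by (simp add: abs_mult mult_left_mono)
qed simp

lemma deriv_integral:
  fixes u u' :: "real \<Rightarrow> 'a \<Rightarrow> real" and M :: "'a measure"
  assumes \<delta>: "\<delta> > 0"
    and meas: "\<And>r. u r \<in> borel_measurable M" and meas': "u' t \<in> borel_measurable M"
    and int: "integrable M (u t)" and intw: "integrable M w"
    and der: "\<And>x r. x \<in> space M \<Longrightarrow> \<bar>r - t\<bar> < \<delta> \<Longrightarrow> ((\<lambda>r. u r x) has_real_derivative u' r x) (at r)"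
    and bnd: "\<And>x r. x \<in> space M \<Longrightarrow> \<bar>r - t\<bar> < \<delta> \<Longrightarrow> \<bar>u' r x\<bar> \<le> w x"
  shows "((\<lambda>r. \<integral>x. u r x \<partial>M) has_real_derivative (\<integral>x. u' t x \<partial>M)) (at t)"
proof -
  have mv: "\<bar>u r x - u t x\<bar> \<le> \<bar>r - t\<bar> * w x" if "x \<in> space M" "\<bar>r - t\<bar> < \<delta>" for x r
    using mvt_bound[of t \<delta> "\<lambda>r. u r x" "\<lambda>r. u' r x" "w x" r] der bnd that by auto
  have intr: "integrable M (u r)" if "\<bar>r - t\<bar> < \<delta>" for r
  proof (rule Bochner_Integration.integrable_bound[of _ "\<lambda>x. \<bar>u t x\<bar> + \<delta> * w x"])
    show "integrable M (\<lambda>x. \<bar>u t x\<bar> + \<delta> * w x)" using int intw by auto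
    show "u r \<in> borel_measurable M" by (rule meas)
    show "AE x in M. norm (u r x) \<le> norm (\<bar>u t x\<bar> + \<delta> * w x)"
    proof (rule AE_I2)
      fix x assume x: "x \<in> space M"
      have w0: "0 \<le> w x" using bnd[OF x, of t] \<delta> by auto
      have "\<bar>u r x\<bar> \<le> \<bar>u t x\<bar> + \<bar>r - t\<bar> * w x" using mv[OF x that] by linarith
      also have "\<dots> \<le> \<bar>u t x\<bar> + \<delta> * w x" using that w0 by (intro add_left_mono mult_right_mono) auto
      finally show "norm (u r x) \<le> norm (\<bar>u t x\<bar> + \<delta> * w x)" using w0 by simp
    qed
  qed
  show ?thesis
    unfolding has_field_derivative_iff tendsto_at_iff_sequentially
  proof (intro allI impI)
    fix X :: "nat \<Rightarrow> real"
    assume X: "\<forall>i. X i \<in> UNIV - {t}" and lim: "X \<longlonglongrightarrow> t"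
    from lim \<delta> obtain N where N: "\<And>n. n \<ge> N \<Longrightarrow> dist (X n) t < \<delta>"
      unfolding lim_sequentially by blast
    define s where "s n x = (u (X (n + N)) x - u t x) / (X (n + N) - t)" for n x
    have Xn: "\<bar>X (n + N) - t\<bar> < \<delta>" "X (n + N) \<noteq> t" for n
      using N[of "n + N"] X by (auto simp: dist_real_def)
    have eq: "((\<integral>x. u (X (n + N)) x \<partial>M) - (\<integral>x. u t x \<partial>M)) / (X (n + N) - t) = (\<integral>x. s n x \<partial>M)" for n
      using intr[OF Xn(1)] int by (simp add: s_def)
    have "(\<lambda>n. \<integral>x. s n x \<partial>M) \<longlonglongrightarrow> (\<integral>x. u' t x \<partial>M)"
    proof (rule integral_dominated_convergence[where w=w])
      show "u' t \<in> borel_measurable M" by (rule meas')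
      show "s n \<in> borel_measurable M" for n unfolding s_def[abs_def] using meas by measurable
      show "integrable M w" by (rule intw)
      show "AE x in M. (\<lambda>n. s n x) \<longlonglongrightarrow> u' t x"
      proof (rule AE_I2)
        fix x assume x: "x \<in> space M"
        have "((\<lambda>r. u r x) has_real_derivative u' t x) (at t)" using der[OF x, of t] \<delta> by simp
        then have "((\<lambda>y. (u y x - u t x) / (y - t)) \<longlongrightarrow> u' t x) (at t)"
          unfolding has_field_derivative_iff .
        note this_lim = this
        have "((\<lambda>y. (u y x - u t x) / (y - t)) \<circ> (\<lambda>n. X (n + N))) \<longlonglongrightarrow> u' t x"
        proof -
          have "(\<lambda>n. X (n + N)) \<longlonglongrightarrow> t" using lim by (rule LIMSEQ_ignore_initial_segment)
          moreover have "\<forall>i. X (i + N) \<in> UNIV - {t}" using Xn(2) by auto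
          ultimately show ?thesis
            by (intro this_lim[unfolded tendsto_at_iff_sequentially, rule_format, of "\<lambda>n. X (n + N)"]) auto
        qed
        then show "(\<lambda>n. s n x) \<longlonglongrightarrow> u' t x" by (simp add: s_def o_def)
      qed
      show "AE x in M. norm (s n x) \<le> w x" for n
      proof (rule AE_I2)
        fix x assume x: "x \<in> space M"
        have "\<bar>u (X (n + N)) x - u t x\<bar> \<le> \<bar>X (n + N) - t\<bar> * w x" using mv[OF x Xn(1)] .
        then show "norm (s n x) \<le> w x" using Xn(2)[of n]
          by (simp add: s_def abs_divide divide_le_eq mult.commute)
      qed
    qed
    then have "(\<lambda>n. ((\<integral>x. u (X (n + N)) x \<partial>M) - (\<integral>x. u t x \<partial>M)) / (X (n + N) - t)) \<longlonglongrightarrow> (\<integral>x. u' t x \<partial>M)"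
      by (simp add: eq)
    then show "((\<lambda>y. ((\<integral>x. u y x \<partial>M) - (\<integral>x. u t x \<partial>M)) / (y - t)) \<circ> X) \<longlonglongrightarrow> (\<integral>x. u' t x \<partial>M)"
      unfolding o_def by (rule LIMSEQ_offset[where k=N])
  qed
qed




lemma cont_meas_gauss: "continuous_on UNIV f \<Longrightarrow> (f::real^'d::finite \<Rightarrow> real) \<in> borel_measurable std_gauss"
  using borel_measurable_continuous_onI[of f] by (simp add: measurable_cong_sets[OF sets_std_gauss refl])

lemma integral_gauss:
  assumes "(f::real^'d::finite \<Rightarrow> real) \<in> borel_measurable borel"
  shows "(\<integral>z. f z \<partial>std_gauss) = (\<integral>z. gd z * f z \<partial>lborel)"
  unfolding std_gauss_eq using assms by (subst integral_density) (auto simp: gd_nonneg)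

lemma lborel_shift:
  assumes "(f::real^'d::finite \<Rightarrow> real) \<in> borel_measurable borel"
  shows "(\<integral>x. f x \<partial>lborel) = (\<integral>z. f (c + z) \<partial>lborel)"
proof -
  have "(\<integral>x. f x \<partial>lborel) = (\<integral>x. f x \<partial>(distr lborel borel ((+) c)))"
    by (simp add: lborel_distr_plus)
  also have "\<dots> = (\<integral>z. f (c + z) \<partial>lborel)"
    using assms by (subst integral_distr) auto
  finally show ?thesis .
qed

lemma integrable_gd: "integrable lborel (gd :: real^'d::finite \<Rightarrow> real)"
proof -
  have "integrable lborel (\<lambda>x::real^'d. (2 * pi) powr (- real CARD('d) / 2) * exp (- (1/2) * (norm x)\<^sup>2))"
    using integrable_exp_sq[of "1/2"] by simp
  then show ?thesis by (simp add: gd_def[abs_def])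
qed

lemma le_2exp8: "\<bar>y::real\<bar> \<le> 2 * exp (y\<^sup>2 / 8)"
proof -
  have "1 + y\<^sup>2 / 8 \<le> exp (y\<^sup>2 / 8)" by (rule exp_ge_add_one_self)
  moreover have "\<bar>y\<bar> \<le> 2 + y\<^sup>2 / 4"
  proof -
    have "0 \<le> (\<bar>y\<bar> - 2)\<^sup>2" by simp
    then show ?thesis by (simp add: power2_eq_square algebra_simps abs_mult_self_eq)
  qed
  ultimately show ?thesis by linarith
qed

lemma gauss_shift_bound:
  fixes x v :: "real^'d::finite" and s :: real
  assumes "\<bar>s\<bar> < 1"
  shows "exp (- (norm (x - s *\<^sub>R v))\<^sup>2 / 2) * (norm x + norm v)
     \<le> exp ((norm v)\<^sup>2 / 2) * (2 + norm v) * exp (- (1/8) * (norm x)\<^sup>2)"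
proof -
  have nsv: "norm (s *\<^sub>R v) \<le> norm v" using assms by (simp add: mult_left_le_one_le)
  have "norm x \<le> norm (x - s *\<^sub>R v) + norm (s *\<^sub>R v)" by (metis diff_add_cancel norm_triangle_ineq)
  then have "(norm x)\<^sup>2 \<le> (norm (x - s *\<^sub>R v) + norm v)\<^sup>2" using nsv by (intro power_mono) auto
  also have "\<dots> \<le> 2 * (norm (x - s *\<^sub>R v))\<^sup>2 + 2 * (norm v)\<^sup>2"
    using sum_squares_bound[of "norm (x - s *\<^sub>R v)" "norm v"]
    by (simp add: power2_eq_square algebra_simps)
  finally have key: "- (norm (x - s *\<^sub>R v))\<^sup>2 / 2 \<le> (norm v)\<^sup>2 / 2 + (- (norm x)\<^sup>2 / 4)" by simp
  have e1: "exp (- (norm (x - s *\<^sub>R v))\<^sup>2 / 2) \<le> exp ((norm v)\<^sup>2 / 2) * exp (- (norm x)\<^sup>2 / 4)"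
    using key by (simp add: exp_add[symmetric])
  have e2: "exp (- (norm x)\<^sup>2 / 4) * (norm x + norm v) \<le> (2 + norm v) * exp (- (1/8) * (norm x)\<^sup>2)"
  proof -
    have h: "exp (- (norm x)\<^sup>2 / 4) = exp (- (1/8) * (norm x)\<^sup>2) * exp (- (norm x)\<^sup>2 / 8)"
      by (simp add: exp_add[symmetric])
    have a: "norm x * exp (- (norm x)\<^sup>2 / 8) \<le> 2"
      using le_2exp8[of "norm x"] by (simp add: exp_minus field_simps)
    have b: "exp (- (norm x)\<^sup>2 / 8) \<le> 1" by simp
    have "exp (- (norm x)\<^sup>2 / 4) * (norm x + norm v)
       = exp (- (1/8) * (norm x)\<^sup>2) * (norm x * exp (- (norm x)\<^sup>2 / 8) + norm v * exp (- (norm x)\<^sup>2 / 8))"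
      unfolding h by (simp add: algebra_simps)
    also have "\<dots> \<le> exp (- (1/8) * (norm x)\<^sup>2) * (2 + norm v)"
      using a b by (intro mult_left_mono add_mono) (auto simp: mult_left_le mult_right_le_one_le)
    finally show ?thesis by (simp add: mult.commute)
  qed
  have "exp (- (norm (x - s *\<^sub>R v))\<^sup>2 / 2) * (norm x + norm v)
      \<le> exp ((norm v)\<^sup>2 / 2) * exp (- (norm x)\<^sup>2 / 4) * (norm x + norm v)"
    using e1 by (intro mult_right_mono) auto
  also have "\<dots> \<le> exp ((norm v)\<^sup>2 / 2) * ((2 + norm v) * exp (- (1/8) * (norm x)\<^sup>2))"
    using e2 by (simp only: mult.assoc) (intro mult_left_mono, auto)
  finally show ?thesis by (simp add: mult.assoc)
qed




lemma norm_shift_sq: "(norm (x - s *\<^sub>R v))\<^sup>2 = (norm x)\<^sup>2 - 2 * s * (x \<bullet> v) + s\<^sup>2 * (norm v)\<^sup>2"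
  for x v :: "'a::real_inner"
  unfolding power2_norm_eq_inner by (simp add: inner_diff_left inner_diff_right inner_commute power2_eq_square algebra_simps)

lemma gd_shift_deriv:
  fixes x v :: "real^'d::finite"
  shows "((\<lambda>s. gd (x - s *\<^sub>R v)) has_real_derivative gd (x - s *\<^sub>R v) * ((x - s *\<^sub>R v) \<bullet> v)) (at s)"
proof -
  define C where "C = (2 * pi) powr (- real CARD('d) / 2)"
  have eq: "gd (x - s *\<^sub>R v) = C * exp (- ((norm x)\<^sup>2 - 2 * s * (x \<bullet> v) + s\<^sup>2 * (norm v)\<^sup>2) / 2)" for s
    by (simp add: gd_def C_def norm_shift_sq)
  have ip: "(x - s *\<^sub>R v) \<bullet> v = x \<bullet> v - s * (norm v)\<^sup>2"
    by (simp add: inner_diff_left power2_norm_eq_inner)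
  show ?thesis unfolding eq ip
    by (auto intro!: derivative_eq_intros)
qed

lemma stein:
  fixes k :: "real^'d::finite \<Rightarrow> real" and Dk :: "real^'d \<Rightarrow> real^'d \<Rightarrow> real" and v :: "real^'d"
  assumes der: "\<And>z. (k has_derivative Dk z) (at z)"
    and kb: "\<And>z. \<bar>k z\<bar> \<le> B"
    and dkb: "\<And>z. \<bar>Dk z v\<bar> \<le> B'"
    and dkc: "continuous_on UNIV (\<lambda>z. Dk z v)"
  shows "(\<integral>z. k z * (z \<bullet> v) \<partial>std_gauss) = (\<integral>z. Dk z v \<partial>std_gauss)"
proof -
  interpret P: prob_space "std_gauss :: (real^'d) measure" by (rule prob_std_gauss)
  have kc: "continuous_on UNIV k"
    by (rule has_derivative_continuous_on[of _ _ Dk]) (use der in auto)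
  have kmeas[measurable]: "k \<in> borel_measurable borel" by (rule borel_measurable_continuous_onI[OF kc])
  have B0: "0 \<le> B" using kb[of 0] by linarith
  have dline: "((\<lambda>r. k (z + r *\<^sub>R v)) has_real_derivative Dk (z + r *\<^sub>R v) v) (at r)" for z r
  proof -
    have lin: "linear (Dk (z + r *\<^sub>R v))" using der by (rule has_derivative_linear)
    have "((\<lambda>r. z + r *\<^sub>R v) has_derivative (\<lambda>h. h *\<^sub>R v)) (at r)"
      by (auto intro!: derivative_eq_intros)
    from has_derivative_compose[OF this der[of "z + r *\<^sub>R v"]]
    have "((\<lambda>r. k (z + r *\<^sub>R v)) has_derivative (\<lambda>h. Dk (z + r *\<^sub>R v) (h *\<^sub>R v))) (at r)" .
    then show ?thesis unfolding has_field_derivative_def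
      by (rule has_derivative_eq_rhs) (auto simp: linear_cmul[OF lin] fun_eq_iff)
  qed
  have d1: "((\<lambda>s. \<integral>z. k (z + s *\<^sub>R v) \<partial>std_gauss) has_real_derivative (\<integral>z. Dk (z + 0 *\<^sub>R v) v \<partial>std_gauss)) (at 0)"
  proof (rule deriv_integral[where \<delta>=1 and w="\<lambda>_. B'"])
    show "(\<lambda>z. k (z + r *\<^sub>R v)) \<in> borel_measurable std_gauss" for r
      by (rule cont_meas_gauss) (intro continuous_on_compose2[OF kc] continuous_intros, auto)
    show "(\<lambda>z. Dk (z + 0 *\<^sub>R v) v) \<in> borel_measurable std_gauss" using cont_meas_gauss[OF dkc] by simp
    show "integrable std_gauss (\<lambda>z. k (z + 0 *\<^sub>R v))"
      by (rule P.integrable_const_bound[where B=B]) (use kb cont_meas_gauss[OF kc] in auto)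
    show "integrable (std_gauss :: (real^'d) measure) (\<lambda>_. B')" by (rule P.integrable_const)
  qed (auto simp: dline dkb)
  have K2: "(\<integral>z. k (z + s *\<^sub>R v) \<partial>std_gauss) = (\<integral>x. gd (x - s *\<^sub>R v) * k x \<partial>lborel)" for s
  proof -
    have "(\<integral>z. k (z + s *\<^sub>R v) \<partial>std_gauss) = (\<integral>z. gd z * k (z + s *\<^sub>R v) \<partial>lborel)"
      by (rule integral_gauss) measurable
    also have "\<dots> = (\<integral>z. gd ((s *\<^sub>R v + z) - s *\<^sub>R v) * k (s *\<^sub>R v + z) \<partial>lborel)"
      by (simp add: add.commute)
    also have "\<dots> = (\<integral>x. gd (x - s *\<^sub>R v) * k x \<partial>lborel)"
      by (rule lborel_shift[symmetric]) measurable
    finally show ?thesis .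
  qed
  define C0 where "C0 = (2 * pi) powr (- real CARD('d) / 2)"
  have C0: "C0 > 0" by (simp add: C0_def)
  define W where "W x = B * C0 * norm v * (exp ((norm v)\<^sup>2 / 2) * (2 + norm v) * exp (- (1/8) * (norm x)\<^sup>2))" for x :: "real^'d"
  have d2: "((\<lambda>s. \<integral>x. gd (x - s *\<^sub>R v) * k x \<partial>lborel) has_real_derivative
            (\<integral>x. gd (x - 0 *\<^sub>R v) * ((x - 0 *\<^sub>R v) \<bullet> v) * k x \<partial>lborel)) (at 0)"
  proof (rule deriv_integral[where \<delta>=1 and w=W])
    show "(\<lambda>x. gd (x - r *\<^sub>R v) * k x) \<in> borel_measurable lborel" for r by measurable
    show "(\<lambda>x. gd (x - 0 *\<^sub>R v) * ((x - 0 *\<^sub>R v) \<bullet> v) * k x) \<in> borel_measurable lborel" by measurable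
    show "integrable lborel (\<lambda>x. gd (x - 0 *\<^sub>R v) * k x)"
    proof (rule Bochner_Integration.integrable_bound[of _ "\<lambda>x. B * gd x"])
      show "integrable lborel (\<lambda>x::real^'d. B * gd x)" using integrable_gd[where 'd='d] by simp
      show "AE x in lborel. norm (gd (x - 0 *\<^sub>R v) * k x) \<le> norm (B * gd x)"
      proof (rule AE_I2)
        fix x :: "real^'d"
        have "\<bar>gd x\<bar> * \<bar>k x\<bar> \<le> \<bar>gd x\<bar> * B" using kb[of x] by (intro mult_left_mono) auto
        then show "norm (gd (x - 0 *\<^sub>R v) * k x) \<le> norm (B * gd x)"
          using B0 by (simp add: abs_mult mult.commute)
      qed
    qed measurable
    show "integrable lborel W"
      unfolding W_def using integrable_exp_sq[of "1/8", where 'd='d] by simp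
    show "((\<lambda>r. gd (x - r *\<^sub>R v) * k x) has_real_derivative gd (x - r *\<^sub>R v) * ((x - r *\<^sub>R v) \<bullet> v) * k x) (at r)" for x r
      by (auto intro!: derivative_eq_intros gd_shift_deriv[THEN DERIV_cong])
    show "\<bar>gd (x - r *\<^sub>R v) * ((x - r *\<^sub>R v) \<bullet> v) * k x\<bar> \<le> W x" if "\<bar>r - 0\<bar> < 1" for x r
    proof -
      have r1: "\<bar>r\<bar> < 1" using that by simp
      have n1: "norm (x - r *\<^sub>R v) \<le> norm x + norm v"
      proof -
        have "norm (x - r *\<^sub>R v) \<le> norm x + norm (r *\<^sub>R v)" by (rule norm_triangle_ineq4)
        also have "norm (r *\<^sub>R v) \<le> norm v" using r1 by (simp add: mult_left_le_one_le)
        finally show ?thesis by simp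
      qed
      have "\<bar>(x - r *\<^sub>R v) \<bullet> v\<bar> \<le> (norm x + norm v) * norm v"
        using Cauchy_Schwarz_ineq2[of "x - r *\<^sub>R v" v] n1 by (meson mult_right_mono norm_ge_zero order_trans)
      then have "\<bar>gd (x - r *\<^sub>R v) * ((x - r *\<^sub>R v) \<bullet> v) * k x\<bar>
          \<le> gd (x - r *\<^sub>R v) * ((norm x + norm v) * norm v) * B"
        using kb[of x] gd_nonneg[of "x - r *\<^sub>R v"] B0
        by (simp add: abs_mult) (intro mult_mono mult_left_mono, auto)
      also have "\<dots> = B * C0 * norm v * (exp (- (norm (x - r *\<^sub>R v))\<^sup>2 / 2) * (norm x + norm v))"
        by (simp add: gd_def C0_def)
      also have "\<dots> \<le> W x" unfolding W_def
        using gauss_shift_bound[OF r1, of x v] B0 C0 by (intro mult_left_mono) auto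
      finally show ?thesis .
    qed
  qed auto
  have "(\<lambda>s. \<integral>z. k (z + s *\<^sub>R v) \<partial>std_gauss) = (\<lambda>s. \<integral>x. gd (x - s *\<^sub>R v) * k x \<partial>lborel)"
    using K2 by auto
  with d1 have d1': "((\<lambda>s. \<integral>x. gd (x - s *\<^sub>R v) * k x \<partial>lborel) has_real_derivative (\<integral>z. Dk z v \<partial>std_gauss)) (at 0)"
    by simp
  have "(\<integral>z. k z * (z \<bullet> v) \<partial>std_gauss) = (\<integral>x. gd x * (k x * (x \<bullet> v)) \<partial>lborel)"
    by (rule integral_gauss) measurable
  also have "\<dots> = (\<integral>x. gd (x - 0 *\<^sub>R v) * ((x - 0 *\<^sub>R v) \<bullet> v) * k x \<partial>lborel)"
    by (simp add: mult_ac)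
  also have "\<dots> = (\<integral>z. Dk z v \<partial>std_gauss)"
    using DERIV_unique[OF d2 d1'] .
  finally show ?thesis .
qed




definition outer :: "real^'d \<Rightarrow> real^'d^'d" where
  "outer u = (\<chi> i j. u $ i * u $ j)"

lemma outer_mult: "outer u *v x = (u \<bullet> x) *\<^sub>R u"
  by (simp add: outer_def vec_eq_iff matrix_vector_mult_def inner_vec_def sum_distrib_left mult_ac)

lemma outer_zero[simp]: "outer 0 = 0"
  by (simp add: outer_def vec_eq_iff)

lemma outer_scale: "outer (c *\<^sub>R u) = (c * c) *\<^sub>R outer u"
  by (simp add: outer_def vec_eq_iff)

lemma transpose_outer: "transpose (outer u) = outer u"
  by (simp add: outer_def transpose_def vec_eq_iff mult.commute)

lemma sym_inner:
  fixes S :: "real^'d^'d"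
  assumes "transpose S = S"
  shows "(S *v x) \<bullet> y = x \<bullet> (S *v y)"
proof -
  have "x \<bullet> (S *v y) = (x v* S) \<bullet> y" by (simp add: dot_lmul_matrix)
  also have "x v* S = transpose S *v x" by simp
  finally show ?thesis using assms by simp
qed

lemma quad_scale: "(c *\<^sub>R y) \<bullet> (S *v (c *\<^sub>R y)) = c\<^sup>2 * (y \<bullet> (S *v y))"
  for S :: "real^'d^'d"
  by (simp add: matrix_vector_mult_scaleR power2_eq_square)

lemma at_le_bt2:
  fixes a b :: real
  assumes "\<And>t. a * t \<le> b * t\<^sup>2"
  shows "a = 0"
proof -
  define t where "t = a / (\<bar>b\<bar> + 1)"
  have p: "\<bar>b\<bar> + 1 > 0" by simp
  have "a * t \<le> b * t\<^sup>2" by (rule assms)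
  also have "b * t\<^sup>2 \<le> \<bar>b\<bar> * t\<^sup>2" by (intro mult_right_mono) auto
  finally have h: "a * a / (\<bar>b\<bar> + 1) \<le> \<bar>b\<bar> * (a * a) / ((\<bar>b\<bar> + 1) * (\<bar>b\<bar> + 1))"
    by (simp add: t_def power2_eq_square)
  have "(a * a / (\<bar>b\<bar> + 1)) * ((\<bar>b\<bar> + 1) * (\<bar>b\<bar> + 1))
      \<le> (\<bar>b\<bar> * (a * a) / ((\<bar>b\<bar> + 1) * (\<bar>b\<bar> + 1))) * ((\<bar>b\<bar> + 1) * (\<bar>b\<bar> + 1))"
    by (rule mult_right_mono[OF h]) simp
  then have "a * a * (\<bar>b\<bar> + 1) \<le> \<bar>b\<bar> * (a * a)" using p
    by (simp del: distrib_left distrib_right add: divide_simps)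
  then have "a * a \<le> 0" by (simp add: algebra_simps)
  then show ?thesis using zero_le_square[of a] by (metis antisym mult_eq_0_iff)
qed

lemma kernel_subspace: "subspace {x. (S::real^'d^'d) *v x = 0}"
  by (auto simp: subspace_def matrix_vector_right_distrib matrix_vector_mult_scaleR)

lemma decomp_aux:
  "\<forall>S::real^'d^'d. CARD('d) - dim {x. S *v x = 0} = n \<longrightarrow> transpose S = S \<longrightarrow> (\<forall>v. 0 \<le> v \<bullet> (S *v v)) \<longrightarrow>
     (\<exists>w::'d \<Rightarrow> real^'d. S = (\<Sum>i\<in>UNIV. outer (w i)) \<and> card {i. w i \<noteq> 0} + dim {x. S *v x = 0} \<le> CARD('d))"
proof (induction n rule: less_induct)
  case (less n)
  show ?case
  proof (intro allI impI)
    fix S :: "real^'d^'d"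
    assume n: "CARD('d) - dim {x. S *v x = 0} = n" and sym: "transpose S = S" and psd: "\<forall>v. 0 \<le> v \<bullet> (S *v v)"
    let ?K = "{x. S *v x = 0}"
    show "\<exists>w::'d \<Rightarrow> real^'d. S = (\<Sum>i\<in>UNIV. outer (w i)) \<and> card {i. w i \<noteq> 0} + dim ?K \<le> CARD('d)"
    proof (cases "S = 0")
      case True
      then show ?thesis
        by (intro exI[of _ "\<lambda>_. 0"]) (simp add: dim_subset_UNIV_cart)
    next
      case False
      define f where "f v = v \<bullet> (S *v v)" for v :: "real^'d"
      have fc: "continuous_on (sphere 0 1) f" unfolding f_def
        by (intro continuous_intros)
      obtain i0 :: 'd where True by simp
      have ne: "sphere (0::real^'d) 1 \<noteq> {}" using norm_axis_1[of i0]
        by (metis (no_types) mem_sphere_0 empty_iff)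
      obtain u where u: "u \<in> sphere 0 1" and umax: "\<And>y. y \<in> sphere 0 1 \<Longrightarrow> f y \<le> f u"
        using continuous_attains_sup[OF compact_sphere ne fc] by blast
      have nu: "norm u = 1" using u by simp
      have uu: "u \<bullet> u = 1" using nu by (simp add: norm_eq_1)
      define lam where "lam = f u"
      have Sx_sym: "(S *v x) \<bullet> y = x \<bullet> (S *v y)" for x y using sym_inner[OF sym] .
      have fexp: "f (a + b) = f a + 2 * (a \<bullet> (S *v b)) + f b" for a b
      proof -
        have "b \<bullet> (S *v a) = a \<bullet> (S *v b)" by (metis Sx_sym inner_commute)
        then show ?thesis
          by (simp add: f_def matrix_vector_right_distrib inner_add_left inner_add_right)
      qed
      have fsc: "f (c *\<^sub>R a) = c\<^sup>2 * f a" for c a by (simp add: f_def matrix_vector_mult_scaleR power2_eq_square)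
      have fmax: "f y \<le> lam * (y \<bullet> y)" for y
      proof (cases "y = 0")
        case True then show ?thesis by (simp add: f_def)
      next
        case False
        let ?y = "(1 / norm y) *\<^sub>R y"
        have "?y \<in> sphere 0 1" using False by simp
        then have "f ?y \<le> lam" using umax lam_def by simp
        moreover have "f ?y = (1 / norm y)\<^sup>2 * f y" by (rule fsc)
        moreover have "y \<bullet> y = (norm y)\<^sup>2" by (simp add: power2_norm_eq_inner)
        moreover have "norm y > 0" using False by simp
        ultimately show ?thesis by (simp add: field_simps)
      qed
      have lam_pos: "lam > 0"
      proof (rule ccontr)
        assume "\<not> lam > 0"
        then have z: "f y = 0" for y
          using fmax[of y] psd inner_ge_zero[of y] unfolding f_def
          by (smt (verit) mult_nonpos_nonneg)
        have "S *v x = 0" for x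
        proof -
          have "f (x + S *v x) = f x + 2 * (x \<bullet> (S *v (S *v x))) + f (S *v x)" by (rule fexp)
          then have "(S *v x) \<bullet> (S *v x) = 0" using z by (simp add: Sx_sym)
          then show ?thesis by simp
        qed
        then have "S = 0" by (simp add: matrix_eq)
        with False show False by simp
      qed
      have eig: "S *v u = lam *\<^sub>R u"
      proof -
        have key: "(y - (y \<bullet> u) *\<^sub>R u) \<bullet> (S *v u) = 0" for y
        proof -
          define z where "z = y - (y \<bullet> u) *\<^sub>R u"
          have zu: "z \<bullet> u = 0" using uu by (simp add: z_def inner_diff_left)
          have "(2 * (z \<bullet> (S *v u))) * t \<le> (lam * (z \<bullet> z) - f z) * t\<^sup>2" for t
          proof -
            have A: "f (u + t *\<^sub>R z) \<le> lam * ((u + t *\<^sub>R z) \<bullet> (u + t *\<^sub>R z))" by (rule fmax)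
            have B: "f (u + t *\<^sub>R z) = lam + 2 * t * (z \<bullet> (S *v u)) + t\<^sup>2 * f z"
            proof -
              have "u \<bullet> (S *v z) = z \<bullet> (S *v u)" by (metis Sx_sym inner_commute)
              then show ?thesis
                unfolding fexp fsc lam_def by (simp add: matrix_vector_mult_scaleR)
            qed
            have C: "(u + t *\<^sub>R z) \<bullet> (u + t *\<^sub>R z) = 1 + t\<^sup>2 * (z \<bullet> z)" using uu zu
              by (simp add: inner_add_left inner_add_right inner_commute power2_eq_square)
            have "lam + 2 * t * (z \<bullet> (S *v u)) + t\<^sup>2 * f z \<le> lam * (1 + t\<^sup>2 * (z \<bullet> z))"
              using A unfolding B C .
            then show ?thesis by (simp add: algebra_simps)
          qed
          then have "2 * (z \<bullet> (S *v u)) = 0" by (rule at_le_bt2)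
          then show ?thesis by (simp add: z_def)
        qed
        have yy: "y \<bullet> (S *v u) = lam * (y \<bullet> u)" for y
          using key[of y] by (simp add: inner_diff_left lam_def f_def mult.commute)
        define e where "e = S *v u - lam *\<^sub>R u"
        have "e \<bullet> e = e \<bullet> (S *v u) - lam * (e \<bullet> u)"
          by (simp add: e_def inner_diff_right)
        then have "e \<bullet> e = 0" using yy[of e] by simp
        then have "(S *v u - lam *\<^sub>R u) \<bullet> (S *v u - lam *\<^sub>R u) = 0" by (simp add: e_def)
        then show ?thesis by simp
      qed
      define S' where "S' = S - lam *\<^sub>R outer u"
      have smul: "(c *\<^sub>R A) *v x = c *\<^sub>R (A *v x)" for c and A :: "real^'d^'d" and x
        by (simp add: vec_eq_iff matrix_vector_mult_def sum_distrib_left mult_ac)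
      have S'v: "S' *v x = S *v x - (lam * (u \<bullet> x)) *\<^sub>R u" for x
        by (simp add: S'_def matrix_vector_mult_diff_rdistrib smul outer_mult)
      have sym': "transpose S' = S'"
      proof -
        have "transpose S' = transpose S - lam *\<^sub>R transpose (outer u)"
          by (simp add: S'_def transpose_def vec_eq_iff)
        then show ?thesis by (simp add: sym transpose_outer S'_def)
      qed
      have uS: "u \<bullet> (S *v x) = lam * (u \<bullet> x)" for x
        by (metis Sx_sym eig inner_scaleR_left)
      have psd': "\<forall>v. 0 \<le> v \<bullet> (S' *v v)"
      proof
        fix v
        define y where "y = v + (- (u \<bullet> v)) *\<^sub>R u"
        have "f y = f v + 2 * (v \<bullet> (S *v ((- (u \<bullet> v)) *\<^sub>R u))) + f ((- (u \<bullet> v)) *\<^sub>R u)"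
          unfolding y_def by (rule fexp)
        also have "\<dots> = f v - lam * (u \<bullet> v)\<^sup>2"
          unfolding fsc matrix_vector_mult_scaleR eig
          by (simp add: f_def uu inner_commute power2_eq_square matrix_vector_mult_scaleR eig)
        also have "\<dots> = v \<bullet> (S' *v v)"
          by (simp add: S'v f_def inner_diff_right power2_eq_square inner_commute[of v u])
        finally show "0 \<le> v \<bullet> (S' *v v)" using psd unfolding f_def by metis
      qed
      have kerS: "?K \<subseteq> {x. S' *v x = 0}"
      proof
        fix x assume "x \<in> ?K"
        then have "S *v x = 0" by simp
        moreover then have "u \<bullet> x = 0" using uS[of x] lam_pos by simp
        ultimately show "x \<in> {x. S' *v x = 0}" by (simp add: S'v)
      qed
      have uK': "u \<in> {x. S' *v x = 0}" by (simp add: S'v eig uu)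
      have uK: "u \<notin> ?K" using eig lam_pos nu by auto
      have dimlt: "dim ?K < dim {x. S' *v x = 0}"
      proof -
        have "dim (insert u ?K) = dim ?K + 1"
        proof -
          have spK: "span ?K = ?K" by (rule span_eq_iff[THEN iffD2, OF kernel_subspace])
          have "u \<notin> span ?K" unfolding spK by (rule uK)
          then show ?thesis by (simp add: dim_insert)
        qed
        moreover have "dim (insert u ?K) \<le> dim {x. S' *v x = 0}"
          using kerS uK' by (intro dim_subset) auto
        ultimately show ?thesis by simp
      qed
      have dle: "dim {x. S' *v x = 0} \<le> CARD('d)" by (rule dim_subset_UNIV_cart)
      have "CARD('d) - dim {x. S' *v x = 0} < n" using n dimlt dle by linarith
      from less.IH[OF this, rule_format, OF refl sym' psd'[rule_format]]
      obtain w' :: "'d \<Rightarrow> real^'d" where w': "S' = (\<Sum>i\<in>UNIV. outer (w' i))"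
        and cw': "card {i. w' i \<noteq> 0} + dim {x. S' *v x = 0} \<le> CARD('d)" by blast
      have "card {i. w' i \<noteq> 0} < CARD('d)" using cw' dimlt by linarith
      then obtain i where wi: "w' i = 0"
      proof -
        assume h: "\<And>i. w' i = 0 \<Longrightarrow> thesis"
        show thesis
        proof (rule ccontr)
          assume "\<not> thesis"
          then have "{i. w' i \<noteq> 0} = UNIV" using h by auto
          with \<open>card {i. w' i \<noteq> 0} < CARD('d)\<close> show False by simp
        qed
      qed
      define w where "w = w'(i := sqrt lam *\<^sub>R u)"
      have "(\<Sum>j\<in>UNIV. outer (w j)) = outer (w i) + (\<Sum>j\<in>UNIV - {i}. outer (w j))"
        by (simp add: sum.remove)
      also have "(\<Sum>j\<in>UNIV - {i}. outer (w j)) = (\<Sum>j\<in>UNIV - {i}. outer (w' j))"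
        by (rule sum.cong) (auto simp: w_def)
      also have "\<dots> = (\<Sum>j\<in>UNIV. outer (w' j))"
        using sum.remove[of UNIV i "\<lambda>j. outer (w' j)"] wi by simp
      also have "outer (w i) = lam *\<^sub>R outer u"
        using lam_pos by (simp add: w_def outer_scale)
      finally have sumeq: "(\<Sum>j\<in>UNIV. outer (w j)) = S"
        using w' by (simp add: S'_def) (metis add.commute diff_add_cancel)
      have "{j. w j \<noteq> 0} \<subseteq> insert i {j. w' j \<noteq> 0}" by (auto simp: w_def)
      then have "card {j. w j \<noteq> 0} \<le> card (insert i {j. w' j \<noteq> 0})" by (intro card_mono) auto
      also have "\<dots> \<le> card {j. w' j \<noteq> 0} + 1" by (simp add: card_insert_le_m1 card_insert_if)
      finally have "card {j. w j \<noteq> 0} + dim ?K \<le> CARD('d)" using cw' dimlt by linarith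
      with sumeq show ?thesis by metis
    qed
  qed
qed


lemma sqrt_exists:
  fixes S :: "real^'d^'d"
  assumes "transpose S = S" "\<forall>v. 0 \<le> v \<bullet> (S *v v)"
  shows "\<exists>A::real^'d^'d. A ** transpose A = S"
proof -
  obtain w :: "'d \<Rightarrow> real^'d" where w: "S = (\<Sum>i\<in>UNIV. outer (w i))"
    using decomp_aux[rule_format, OF refl assms(1) assms(2)[rule_format]] by blast
  define A where "A = (\<chi> r c. (w c) $ r)"
  have "A ** transpose A = (\<Sum>i\<in>UNIV. outer (w i))"
    by (simp add: vec_eq_iff matrix_matrix_mult_def transpose_def A_def outer_def)
  with w show ?thesis by metis
qed




lemma norm_mv: "norm (M *v x) \<le> norm M * norm x" for M :: "real^'n^'m"
proof -
  have "(norm (M *v x))\<^sup>2 = (\<Sum>i\<in>UNIV. ((M *v x) $ i)\<^sup>2)"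
    by (simp add: norm_vec_def L2_set_def sum_nonneg)
  also have "\<dots> = (\<Sum>i\<in>UNIV. (M $ i \<bullet> x)\<^sup>2)" by (simp add: matrix_vector_mul_component)
  also have "\<dots> \<le> (\<Sum>i\<in>UNIV. (norm (M $ i))\<^sup>2 * (norm x)\<^sup>2)"
  proof (rule sum_mono)
    fix i
    have "\<bar>M $ i \<bullet> x\<bar> \<le> norm (M $ i) * norm x" by (rule Cauchy_Schwarz_ineq2)
    then have "\<bar>M $ i \<bullet> x\<bar>\<^sup>2 \<le> (norm (M $ i) * norm x)\<^sup>2" by (intro power_mono) auto
    then show "(M $ i \<bullet> x)\<^sup>2 \<le> (norm (M $ i))\<^sup>2 * (norm x)\<^sup>2" by (simp add: power_mult_distrib)
  qed
  also have "\<dots> = (norm M * norm x)\<^sup>2"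
    by (simp add: norm_vec_def L2_set_def sum_distrib_right power_mult_distrib sum_nonneg)
  finally show ?thesis by (rule power2_le_imp_le) simp
qed

definition trm :: "real^'d^'d \<Rightarrow> real^'d^'d \<Rightarrow> real" where
  "trm Hm S = (\<Sum>i\<in>UNIV. \<Sum>k\<in>UNIV. Hm $ i $ k * S $ k $ i)"

lemma trace_id:
  fixes A Hm :: "real^'d^'d"
  shows "(\<Sum>j\<in>UNIV. (transpose A *v (Hm *v (c *\<^sub>R (A *v axis j 1)))) $ j) = c * trm Hm (A ** transpose A)"
  by (simp add: trm_def matrix_vector_mult_def matrix_matrix_mult_def transpose_def axis_def
      sum_distrib_left sum_distrib_right mult_ac if_distrib sum.delta cong: if_cong)
     (rule sum.swap[THEN trans], rule sum.cong, simp, rule sum.swap[THEN trans], simp add: mult_ac)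




lemma integrable_norm_gauss: "integrable (std_gauss :: (real^'d::finite) measure) (\<lambda>z. norm z)"
proof -
  define C0 where "C0 = (2 * pi) powr (- real CARD('d) / 2)"
  have C0: "C0 > 0" by (simp add: C0_def)
  have "integrable (lborel :: (real^'d) measure) (\<lambda>x. gd x *\<^sub>R norm x)"
  proof (rule Bochner_Integration.integrable_bound[of _ "\<lambda>x. 2 * C0 * exp (- (3/8) * (norm x)\<^sup>2)"])
    show "integrable (lborel :: (real^'d) measure) (\<lambda>x. 2 * C0 * exp (- (3/8) * (norm x)\<^sup>2))"
      using integrable_exp_sq[of "3/8", where 'd='d] by simp
    show "AE x in lborel. norm (gd x *\<^sub>R norm x) \<le> norm (2 * C0 * exp (- (3/8) * (norm (x::real^'d))\<^sup>2))"
    proof (rule AE_I2)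
      fix x :: "real^'d"
      have "gd x * norm x \<le> C0 * exp (- (norm x)\<^sup>2 / 2) * (2 * exp ((norm x)\<^sup>2 / 8))"
        using le_2exp8[of "norm x"] C0 by (simp add: gd_def C0_def)
      also have "\<dots> = 2 * C0 * exp (- (3/8) * (norm x)\<^sup>2)"
        by (simp add: mult_ac exp_add[symmetric])
      finally show "norm (gd x *\<^sub>R norm x) \<le> norm (2 * C0 * exp (- (3/8) * (norm x)\<^sup>2))"
        using C0 gd_nonneg[of x] by simp
    qed
  qed measurable
  then show ?thesis unfolding std_gauss_eq
    by (subst integrable_density) (auto simp: gd_nonneg)
qed

lemma bl_mv_left: "bounded_linear (\<lambda>M::real^'n^'m. M *v w)"
proof (rule bounded_linear_intro[where K="norm w"])
  show "(M + N) *v w = M *v w + N *v w" for M N :: "real^'n^'m" by (rule matrix_vector_mult_add_rdistrib)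
  show "(c *\<^sub>R M) *v w = c *\<^sub>R (M *v w)" for c and M :: "real^'n^'m"
    by (simp add: vec_eq_iff matrix_vector_mult_def sum_distrib_left mult_ac)
  show "norm (M *v w) \<le> norm M * norm w" for M :: "real^'n^'m" by (rule norm_mv)
qed

lemma stein_mat:
  fixes g :: "real^'d::finite \<Rightarrow> real^'d" and H :: "real^'d \<Rightarrow> real^'d^'d" and A :: "real^'d^'d"
  assumes gder: "\<And>\<xi>. (g has_derivative (\<lambda>h. H \<xi> *v h)) (at \<xi>)"
    and Hc: "continuous_on UNIV H" and gb: "\<And>\<xi>. norm (g \<xi>) \<le> G1" and Hb: "\<And>\<xi>. norm (H \<xi>) \<le> G2"
  shows "(\<integral>y. g (b + a *\<^sub>R (A *v y)) \<bullet> (A *v y) \<partial>std_gauss)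
       = a * (\<integral>y. trm (H (b + a *\<^sub>R (A *v y))) (A ** transpose A) \<partial>std_gauss)"
proof -
  interpret P: prob_space "std_gauss :: (real^'d) measure" by (rule prob_std_gauss)
  define Z where "Z y = b + a *\<^sub>R (A *v y)" for y
  have Zd: "(Z has_derivative (\<lambda>h. a *\<^sub>R (A *v h))) (at y)" for y
    unfolding Z_def
    by (auto intro!: derivative_eq_intros bounded_linear.has_derivative[OF matrix_vector_mul_bounded_linear])
  have Zc: "continuous_on UNIV Z"
    by (rule has_derivative_continuous_on[of _ _ "\<lambda>_ h. a *\<^sub>R (A *v h)"]) (use Zd in auto)
  have gc: "continuous_on UNIV g"
    by (rule has_derivative_continuous_on[of _ _ "\<lambda>\<xi> h. H \<xi> *v h"]) (use gder in auto)
  have HZc: "continuous_on UNIV (\<lambda>y. H (Z y))" by (rule continuous_on_compose2[OF Hc Zc]) auto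
  have gZc: "continuous_on UNIV (\<lambda>y. g (Z y))" by (rule continuous_on_compose2[OF gc Zc]) auto
  define k where "k j y = (transpose A *v g (Z y)) $ j" for j y
  define Dk where "Dk j y h = (transpose A *v (H (Z y) *v (a *\<^sub>R (A *v h)))) $ j" for j y h
  have kd: "(k j has_derivative Dk j y) (at y)" for j y
  proof -
    have "((\<lambda>y. g (Z y)) has_derivative (\<lambda>h. H (Z y) *v (a *\<^sub>R (A *v h)))) (at y)"
      by (rule has_derivative_compose[OF Zd gder])
    then have "((\<lambda>y. transpose A *v g (Z y)) has_derivative (\<lambda>h. transpose A *v (H (Z y) *v (a *\<^sub>R (A *v h))))) (at y)"
      by (rule bounded_linear.has_derivative[OF matrix_vector_mul_bounded_linear])
    then have "((\<lambda>y. (transpose A *v g (Z y)) $ j) has_derivative (\<lambda>h. (transpose A *v (H (Z y) *v (a *\<^sub>R (A *v h)))) $ j)) (at y)"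
      by (rule bounded_linear.has_derivative[OF bounded_linear_vec_nth])
    then show ?thesis unfolding k_def[abs_def] Dk_def[abs_def] .
  qed
  define KA where "KA = norm (transpose A)"
  have KA0: "0 \<le> KA" by (simp add: KA_def)
  have G10: "0 \<le> G1" using gb[of 0] norm_ge_zero order_trans by blast
  have kb: "\<bar>k j y\<bar> \<le> KA * G1" for j y
  proof -
    have "\<bar>k j y\<bar> \<le> norm (transpose A *v g (Z y))" unfolding k_def by (rule component_le_norm_cart)
    also have "\<dots> \<le> KA * norm (g (Z y))" unfolding KA_def by (rule norm_mv)
    also have "\<dots> \<le> KA * G1" unfolding KA_def by (intro mult_left_mono gb) auto
    finally show ?thesis .
  qed
  have dkb: "\<bar>Dk j y (axis j 1)\<bar> \<le> KA * (G2 * (\<bar>a\<bar> * (norm A * 1)))" for j y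
  proof -
    have "\<bar>Dk j y (axis j 1)\<bar> \<le> norm (transpose A *v (H (Z y) *v (a *\<^sub>R (A *v axis j 1))))"
      unfolding Dk_def by (rule component_le_norm_cart)
    also have "\<dots> \<le> KA * norm (H (Z y) *v (a *\<^sub>R (A *v axis j 1)))" unfolding KA_def by (rule norm_mv)
    also have "norm (H (Z y) *v (a *\<^sub>R (A *v axis j 1))) \<le> norm (H (Z y)) * norm (a *\<^sub>R (A *v axis j 1))"
      by (rule norm_mv)
    also have "\<dots> \<le> G2 * (\<bar>a\<bar> * (norm A * 1))"
    proof (intro mult_mono)
      show "norm (H (Z y)) \<le> G2" by (rule Hb)
      have "norm (A *v axis j 1) \<le> norm A * norm (axis j (1::real))" by (rule norm_mv)
      then show "norm (a *\<^sub>R (A *v axis j 1)) \<le> \<bar>a\<bar> * (norm A * 1)"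
        by (simp add: mult_left_mono)
      show "0 \<le> G2" using Hb[of 0] norm_ge_zero order_trans by blast
    qed auto
    finally show ?thesis unfolding KA_def by (simp add: mult_left_mono)
  qed
  have dkc: "continuous_on UNIV (\<lambda>y. Dk j y (axis j 1))" for j
  proof -
    have "continuous_on UNIV (\<lambda>y. H (Z y) *v (a *\<^sub>R (A *v axis j 1)))"
      by (rule continuous_on_compose2[OF bounded_linear.continuous_on[OF bl_mv_left continuous_on_id] HZc]) auto
    then show ?thesis unfolding Dk_def
      by (intro continuous_on_compose2[OF bounded_linear.continuous_on[OF bounded_linear_vec_nth continuous_on_id]]
          continuous_on_compose2[OF bounded_linear.continuous_on[OF matrix_vector_mul_bounded_linear continuous_on_id]]) auto
  qed
  have kc: "continuous_on UNIV (k j)" for j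
    unfolding k_def
    by (intro continuous_on_compose2[OF bounded_linear.continuous_on[OF bounded_linear_vec_nth continuous_on_id]]
          continuous_on_compose2[OF bounded_linear.continuous_on[OF matrix_vector_mul_bounded_linear continuous_on_id]] gZc) auto
  have eq1: "g (Z y) \<bullet> (A *v y) = (\<Sum>j\<in>UNIV. k j y * (y \<bullet> axis j 1))" for y
  proof -
    have "g (Z y) \<bullet> (A *v y) = (g (Z y) v* A) \<bullet> y" by (simp add: dot_lmul_matrix)
    also have "g (Z y) v* A = transpose A *v g (Z y)" by simp
    also have "(transpose A *v g (Z y)) \<bullet> y = (\<Sum>j\<in>UNIV. k j y * y $ j)"
      by (simp add: inner_vec_def k_def)
    also have "\<dots> = (\<Sum>j\<in>UNIV. k j y * (y \<bullet> axis j 1))"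
      by (simp add: inner_axis)
    finally show ?thesis .
  qed
  have intj: "integrable std_gauss (\<lambda>y. k j y * (y \<bullet> axis j 1))" for j
  proof (rule Bochner_Integration.integrable_bound[of _ "\<lambda>y. KA * G1 * norm y"])
    show "integrable std_gauss (\<lambda>y::real^'d. KA * G1 * norm y)" using integrable_norm_gauss[where 'd='d] by simp
    show "(\<lambda>y. k j y * (y \<bullet> axis j 1)) \<in> borel_measurable std_gauss"
      by (rule cont_meas_gauss) (intro continuous_intros kc)
    show "AE y in std_gauss. norm (k j y * (y \<bullet> axis j 1)) \<le> norm (KA * G1 * norm y)"
    proof (rule AE_I2)
      fix y :: "real^'d"
      have "\<bar>y \<bullet> axis j 1\<bar> \<le> norm y" by (simp add: inner_axis component_le_norm_cart)
      then have "\<bar>k j y\<bar> * \<bar>y \<bullet> axis j 1\<bar> \<le> KA * G1 * norm y"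
        using kb[of j y] by (intro mult_mono) auto
      moreover have "0 \<le> KA * G1 * norm y" using KA0 G10 by simp
      ultimately show "norm (k j y * (y \<bullet> axis j 1)) \<le> norm (KA * G1 * norm y)"
        using KA0 G10 by (simp add: abs_mult)
    qed
  qed
  have "(\<integral>y. g (Z y) \<bullet> (A *v y) \<partial>std_gauss) = (\<Sum>j\<in>UNIV. \<integral>y. k j y * (y \<bullet> axis j 1) \<partial>std_gauss)"
    unfolding eq1 by (rule Bochner_Integration.integral_sum) (rule intj)
  also have "\<dots> = (\<Sum>j\<in>UNIV. \<integral>y. Dk j y (axis j 1) \<partial>std_gauss)"
    by (rule sum.cong[OF refl], rule stein[OF kd kb dkb dkc])
  also have "\<dots> = (\<integral>y. (\<Sum>j\<in>UNIV. Dk j y (axis j 1)) \<partial>std_gauss)"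
  proof (rule Bochner_Integration.integral_sum[symmetric])
    fix j
    show "integrable std_gauss (\<lambda>y. Dk j y (axis j 1))"
      by (rule P.integrable_const_bound[where B="KA * (G2 * (\<bar>a\<bar> * (norm A * 1)))"])
         (use dkb cont_meas_gauss[OF dkc] in auto)
  qed
  also have "\<dots> = (\<integral>y. a * trm (H (Z y)) (A ** transpose A) \<partial>std_gauss)"
    unfolding Dk_def trace_id by simp
  finally show ?thesis by (simp add: Z_def)
qed




abbreviation N2 :: "((real^'d::finite) \<times> (real^'d)) measure" where
  "N2 \<equiv> std_gauss \<Otimes>\<^sub>M std_gauss"

lemma pps: "pair_prob_space (std_gauss :: (real^'d::finite) measure) std_gauss"
  by (simp add: pair_prob_space_def pair_sigma_finite_def prob_std_gauss prob_space_imp_sigma_finite)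

lemma meas2:
  assumes "continuous_on UNIV h"
  shows "(h :: (real^'d::finite) \<times> (real^'d) \<Rightarrow> real) \<in> borel_measurable N2"
proof -
  have "h \<in> borel_measurable borel" by (rule borel_measurable_continuous_onI[OF assms])
  then have "h \<in> borel_measurable (borel \<Otimes>\<^sub>M borel)" by (simp add: borel_prod)
  moreover have s2: "sets N2 = sets ((borel :: (real^'d) measure) \<Otimes>\<^sub>M borel)"
    by (rule sets_pair_measure_cong) simp_all
  ultimately show ?thesis by (subst measurable_cong_sets[OF s2 refl])
qed

lemma N2_fst:
  fixes h :: "real^'d::finite \<Rightarrow> real"
  assumes "integrable std_gauss h"
  shows "integrable N2 (\<lambda>\<omega>. h (fst \<omega>))" "(\<integral>\<omega>. h (fst \<omega>) \<partial>N2) = (\<integral>x. h x \<partial>std_gauss)"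
proof -
  interpret P: prob_space "std_gauss :: (real^'d) measure" by (rule prob_std_gauss)
  have d: "distr N2 std_gauss fst = (std_gauss :: (real^'d) measure)" by (rule P.distr_pair_fst)
  have hm: "h \<in> borel_measurable std_gauss" using assms by auto
  show "integrable N2 (\<lambda>\<omega>. h (fst \<omega>))"
    using assms hm by (subst integrable_distr_eq[symmetric]) (auto simp: d)
  show "(\<integral>\<omega>. h (fst \<omega>) \<partial>N2) = (\<integral>x. h x \<partial>std_gauss)"
    using hm by (subst integral_distr[symmetric]) (auto simp: d)
qed

lemma N2_snd:
  fixes h :: "real^'d::finite \<Rightarrow> real"
  assumes "integrable std_gauss h"
  shows "integrable N2 (\<lambda>\<omega>. h (snd \<omega>))" "(\<integral>\<omega>. h (snd \<omega>) \<partial>N2) = (\<integral>x. h x \<partial>std_gauss)"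
proof -
  interpret P: prob_space "std_gauss :: (real^'d) measure" by (rule prob_std_gauss)
  interpret PP: pair_prob_space "std_gauss :: (real^'d) measure" std_gauss by (rule pps)
  have hm: "h \<in> borel_measurable std_gauss" using assms by auto
  show i: "integrable N2 (\<lambda>\<omega>. h (snd \<omega>))"
  proof (rule PP.Fubini_integrable)
    show "(\<lambda>\<omega>. h (snd \<omega>)) \<in> borel_measurable N2" using hm by measurable
    show "integrable std_gauss (\<lambda>x. \<integral>y. norm (h (snd (x, y))) \<partial>std_gauss)" by simp
    show "AE x in std_gauss. integrable std_gauss (\<lambda>y. h (snd (x, y)))" using assms by simp
  qed
  have "(\<integral>x. (\<integral>y. h y \<partial>std_gauss) \<partial>(std_gauss :: (real^'d) measure)) = (\<integral>\<omega>. case_prod (\<lambda>(x::real^'d) y. h y) \<omega> \<partial>N2)"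
    by (rule PP.integral_fst[of "\<lambda>x y. h y"]) (simp add: split_beta' i)
  then show "(\<integral>\<omega>. h (snd \<omega>) \<partial>N2) = (\<integral>x. h x \<partial>std_gauss)"
    using P.prob_space by (simp add: case_prod_beta)
qed

lemma cont_mv[continuous_intros]: "continuous_on S h \<Longrightarrow> continuous_on S (\<lambda>x. (A::real^'n^'m) *v h x)"
  by (rule continuous_on_compose2[OF bounded_linear.continuous_on[OF matrix_vector_mul_bounded_linear continuous_on_id]]) auto

lemma cont_mv_left[continuous_intros]: "continuous_on S h \<Longrightarrow> continuous_on S (\<lambda>x. (h x :: real^'n^'m) *v w)"
  by (rule continuous_on_compose2[OF bounded_linear.continuous_on[OF bl_mv_left continuous_on_id]]) auto

lemma trm_inner: "trm Hm S = Hm \<bullet> transpose S"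
  by (simp add: trm_def inner_vec_def transpose_def)

lemma norm_transpose: "norm (transpose (M::real^'n^'n)) = norm M"
proof -
  have "(norm (transpose M))\<^sup>2 = (norm M)\<^sup>2"
    by (simp add: power2_norm_eq_inner inner_vec_def transpose_def) (rule sum.swap)
  then show ?thesis by simp
qed

lemma trm_bound: "\<bar>trm Hm S\<bar> \<le> norm Hm * norm S"
  unfolding trm_inner using Cauchy_Schwarz_ineq2[of Hm "transpose S"] by (simp add: norm_transpose)

lemma trm_diff: "trm Hm (S - T) = trm Hm S - trm Hm T"
  by (simp add: trm_def sum_subtractf right_diff_distrib)




lemma abs_int_le:
  fixes h :: "'a \<Rightarrow> real"
  assumes "prob_space M" "h \<in> borel_measurable M" "\<And>x. x \<in> space M \<Longrightarrow> \<bar>h x\<bar> \<le> C"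
  shows "\<bar>\<integral>x. h x \<partial>M\<bar> \<le> C"
proof -
  interpret prob_space M by fact
  have i: "integrable M h" by (rule integrable_const_bound[where B=C]) (use assms in auto)
  have "\<bar>\<integral>x. h x \<partial>M\<bar> \<le> (\<integral>x. \<bar>h x\<bar> \<partial>M)" by (rule integral_abs_bound)
  also have "\<dots> \<le> (\<integral>x. C \<partial>M)" by (rule integral_mono) (use i assms in auto)
  also have "\<dots> = C" by (simp add: prob_space)
  finally show ?thesis .
qed

lemma cont_nth[continuous_intros]: "continuous_on S (h :: 'a::topological_space \<Rightarrow> real^'n) \<Longrightarrow> continuous_on S (\<lambda>x. h x $ i)"
  using bounded_linear.continuous_on[OF bounded_linear_vec_nth[of i]] .

lemma cont_trm[continuous_intros]: "continuous_on S h \<Longrightarrow> continuous_on S (\<lambda>x. trm (h x) T)"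
  unfolding trm_def by (intro continuous_intros)

lemma sigma_lip:
  fixes f :: "real^'d::finite \<Rightarrow> real" and g :: "real^'d \<Rightarrow> real^'d" and H :: "real^'d \<Rightarrow> real^'d^'d"
    and A1 A2 :: "real^'d^'d" and \<mu> :: "real^'d"
  assumes fder: "\<And>\<xi>. (f has_derivative (\<lambda>h. g \<xi> \<bullet> h)) (at \<xi>)"
    and gder: "\<And>\<xi>. (g has_derivative (\<lambda>h. H \<xi> *v h)) (at \<xi>)"
    and Hc: "continuous_on UNIV H" and gb: "\<And>\<xi>. norm (g \<xi>) \<le> G1" and Hb: "\<And>\<xi>. norm (H \<xi>) \<le> G2"
    and fb: "\<And>\<xi>. \<bar>f \<xi>\<bar> \<le> M0"
  shows "\<bar>(\<integral>z. f (\<mu> + A1 *v z) \<partial>std_gauss) - (\<integral>z. f (\<mu> + A2 *v z) \<partial>std_gauss)\<bar>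
           \<le> G2 / 2 * norm (A1 ** transpose A1 - A2 ** transpose A2)"
proof -
  interpret N: prob_space "std_gauss :: (real^'d) measure" by (rule prob_std_gauss)
  interpret PP: pair_prob_space "std_gauss :: (real^'d) measure" std_gauss by (rule pps)
  have fc: "continuous_on UNIV f"
    by (rule has_derivative_continuous_on[of _ _ "\<lambda>\<xi> h. g \<xi> \<bullet> h"]) (use fder in auto)
  have gc: "continuous_on UNIV g"
    by (rule has_derivative_continuous_on[of _ _ "\<lambda>\<xi> h. H \<xi> *v h"]) (use gder in auto)
  have G10: "0 \<le> G1" using gb[of 0] norm_ge_zero order_trans by blast
  have G20: "0 \<le> G2" using Hb[of 0] norm_ge_zero order_trans by blast
  define S1 where "S1 = A1 ** transpose A1"
  define S2 where "S2 = A2 ** transpose A2"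
  define Z where "Z t \<omega> = \<mu> + cos t *\<^sub>R (A1 *v fst \<omega>) + sin t *\<^sub>R (A2 *v snd \<omega>)"
    for t and \<omega> :: "(real^'d) \<times> (real^'d)"
  define W where "W t \<omega> = - sin t *\<^sub>R (A1 *v fst \<omega>) + cos t *\<^sub>R (A2 *v snd \<omega>)"
    for t and \<omega> :: "(real^'d) \<times> (real^'d)"
  define F where "F t = (\<integral>\<omega>. f (Z t \<omega>) \<partial>N2)" for t
  have Zc: "continuous_on UNIV (Z t)" for t unfolding Z_def by (intro continuous_intros)
  have Wc: "continuous_on UNIV (W t)" for t unfolding W_def by (intro continuous_intros)
  have fZc: "continuous_on UNIV (\<lambda>\<omega>. f (Z t \<omega>))" for t by (rule continuous_on_compose2[OF fc Zc]) auto
  have gZc: "continuous_on UNIV (\<lambda>\<omega>. g (Z t \<omega>))" for t by (rule continuous_on_compose2[OF gc Zc]) auto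
  have HZc: "continuous_on UNIV (\<lambda>\<omega>. H (Z t \<omega>))" for t by (rule continuous_on_compose2[OF Hc Zc]) auto
  have Zder: "((\<lambda>t. Z t \<omega>) has_derivative (\<lambda>h. h *\<^sub>R W t \<omega>)) (at t)" for t \<omega>
    unfolding Z_def W_def
    by (auto intro!: derivative_eq_intros simp: fun_eq_iff algebra_simps)
  have fZder: "((\<lambda>t. f (Z t \<omega>)) has_real_derivative g (Z t \<omega>) \<bullet> W t \<omega>) (at t)" for t \<omega>
    unfolding has_field_derivative_def
    by (rule has_derivative_eq_rhs[OF has_derivative_compose[OF Zder fder]]) (simp add: fun_eq_iff mult.commute)
  define KA1 where "KA1 = norm A1"
  define KA2 where "KA2 = norm A2"
  have nA1: "norm (A1 *v x) \<le> KA1 * norm x" for x unfolding KA1_def by (rule norm_mv)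
  have nA2: "norm (A2 *v x) \<le> KA2 * norm x" for x unfolding KA2_def by (rule norm_mv)
  have Wb: "norm (W t \<omega>) \<le> KA1 * norm (fst \<omega>) + KA2 * norm (snd \<omega>)" for t \<omega>
  proof -
    have "norm (W t \<omega>) \<le> norm (- sin t *\<^sub>R (A1 *v fst \<omega>)) + norm (cos t *\<^sub>R (A2 *v snd \<omega>))"
      unfolding W_def by (rule norm_triangle_ineq)
    also have "norm (- sin t *\<^sub>R (A1 *v fst \<omega>)) \<le> norm (A1 *v fst \<omega>)"
      by (simp add: mult_left_le_one_le)
    also have "norm (cos t *\<^sub>R (A2 *v snd \<omega>)) \<le> norm (A2 *v snd \<omega>)"
      by (simp add: mult_left_le_one_le)
    finally show ?thesis using nA1[of "fst \<omega>"] nA2[of "snd \<omega>"] by linarith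
  qed
  define w0 where "w0 \<omega> = G1 * (KA1 * norm (fst \<omega>) + KA2 * norm (snd \<omega>))" for \<omega> :: "(real^'d) \<times> (real^'d)"
  have intf: "integrable N2 (\<lambda>\<omega>::(real^'d) \<times> (real^'d). norm (fst \<omega>))" by (rule N2_fst(1)[OF integrable_norm_gauss])
  have ints: "integrable N2 (\<lambda>\<omega>::(real^'d) \<times> (real^'d). norm (snd \<omega>))" by (rule N2_snd(1)[OF integrable_norm_gauss])
  have intw0: "integrable N2 w0" unfolding w0_def using intf ints by auto
  have dF: "(F has_real_derivative (\<integral>\<omega>. g (Z t \<omega>) \<bullet> W t \<omega> \<partial>N2)) (at t)" for t
    unfolding F_def
  proof (rule deriv_integral[where \<delta>=1 and w=w0])
    show "(\<lambda>\<omega>. f (Z r \<omega>)) \<in> borel_measurable N2" for r by (rule meas2[OF fZc])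
    show "(\<lambda>\<omega>. g (Z t \<omega>) \<bullet> W t \<omega>) \<in> borel_measurable N2"
      by (rule meas2) (intro continuous_intros gZc Wc)
    show "integrable N2 (\<lambda>\<omega>. f (Z t \<omega>))"
      by (rule PP.integrable_const_bound[where B=M0]) (use fb meas2[OF fZc] in auto)
    show "integrable N2 w0" by (rule intw0)
    show "((\<lambda>r. f (Z r \<omega>)) has_real_derivative g (Z r \<omega>) \<bullet> W r \<omega>) (at r)" for \<omega> r by (rule fZder)
    show "\<bar>g (Z r \<omega>) \<bullet> W r \<omega>\<bar> \<le> w0 \<omega>" for \<omega> r
    proof -
      have "\<bar>g (Z r \<omega>) \<bullet> W r \<omega>\<bar> \<le> norm (g (Z r \<omega>)) * norm (W r \<omega>)" by (rule Cauchy_Schwarz_ineq2)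
      also have "\<dots> \<le> G1 * (KA1 * norm (fst \<omega>) + KA2 * norm (snd \<omega>))"
        using G10 by (intro mult_mono gb Wb) auto
      finally show ?thesis by (simp add: w0_def)
    qed
  qed auto
  have int1: "integrable N2 (\<lambda>\<omega>. g (Z t \<omega>) \<bullet> (A1 *v fst \<omega>))" for t
  proof (rule Bochner_Integration.integrable_bound[of _ "\<lambda>\<omega>. G1 * KA1 * norm (fst \<omega>)"])
    show "integrable N2 (\<lambda>\<omega>::(real^'d) \<times> (real^'d). G1 * KA1 * norm (fst \<omega>))" using intf by simp
    show "(\<lambda>\<omega>. g (Z t \<omega>) \<bullet> (A1 *v fst \<omega>)) \<in> borel_measurable N2"
      by (rule meas2) (intro continuous_intros gZc)
    show "AE \<omega> in N2. norm (g (Z t \<omega>) \<bullet> (A1 *v fst \<omega>)) \<le> norm (G1 * KA1 * norm (fst \<omega>))"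
    proof (rule AE_I2)
      fix \<omega> :: "(real^'d) \<times> (real^'d)"
      have "\<bar>g (Z t \<omega>) \<bullet> (A1 *v fst \<omega>)\<bar> \<le> norm (g (Z t \<omega>)) * norm (A1 *v fst \<omega>)" by (rule Cauchy_Schwarz_ineq2)
      also have "\<dots> \<le> G1 * (KA1 * norm (fst \<omega>))" using G10 by (intro mult_mono gb nA1) auto
      finally show "norm (g (Z t \<omega>) \<bullet> (A1 *v fst \<omega>)) \<le> norm (G1 * KA1 * norm (fst \<omega>))"
        using G10 by (simp add: KA1_def mult_ac)
    qed
  qed
  have int2: "integrable N2 (\<lambda>\<omega>. g (Z t \<omega>) \<bullet> (A2 *v snd \<omega>))" for t
  proof (rule Bochner_Integration.integrable_bound[of _ "\<lambda>\<omega>. G1 * KA2 * norm (snd \<omega>)"])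
    show "integrable N2 (\<lambda>\<omega>::(real^'d) \<times> (real^'d). G1 * KA2 * norm (snd \<omega>))" using ints by simp
    show "(\<lambda>\<omega>. g (Z t \<omega>) \<bullet> (A2 *v snd \<omega>)) \<in> borel_measurable N2"
      by (rule meas2) (intro continuous_intros gZc)
    show "AE \<omega> in N2. norm (g (Z t \<omega>) \<bullet> (A2 *v snd \<omega>)) \<le> norm (G1 * KA2 * norm (snd \<omega>))"
    proof (rule AE_I2)
      fix \<omega> :: "(real^'d) \<times> (real^'d)"
      have "\<bar>g (Z t \<omega>) \<bullet> (A2 *v snd \<omega>)\<bar> \<le> norm (g (Z t \<omega>)) * norm (A2 *v snd \<omega>)" by (rule Cauchy_Schwarz_ineq2)
      also have "\<dots> \<le> G1 * (KA2 * norm (snd \<omega>))" using G10 by (intro mult_mono gb nA2) auto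
      finally show "norm (g (Z t \<omega>) \<bullet> (A2 *v snd \<omega>)) \<le> norm (G1 * KA2 * norm (snd \<omega>))"
        using G10 by (simp add: KA2_def mult_ac)
    qed
  qed
  have split: "(\<integral>\<omega>. g (Z t \<omega>) \<bullet> W t \<omega> \<partial>N2)
     = - sin t * (\<integral>\<omega>. g (Z t \<omega>) \<bullet> (A1 *v fst \<omega>) \<partial>N2) + cos t * (\<integral>\<omega>. g (Z t \<omega>) \<bullet> (A2 *v snd \<omega>) \<partial>N2)" for t
  proof -
    have "(\<lambda>\<omega>. g (Z t \<omega>) \<bullet> W t \<omega>) = (\<lambda>\<omega>. - sin t * (g (Z t \<omega>) \<bullet> (A1 *v fst \<omega>)) + cos t * (g (Z t \<omega>) \<bullet> (A2 *v snd \<omega>)))"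
      by (simp add: W_def inner_add_right inner_diff_right fun_eq_iff)
    then show ?thesis using int1[of t] int2[of t] by simp
  qed
  have trmb: "\<bar>trm (H \<xi>) S\<bar> \<le> G2 * norm S" for \<xi> S
    using trm_bound[of "H \<xi>" S] Hb[of \<xi>] by (meson mult_right_mono norm_ge_zero order_trans)
  have inttrm: "integrable N2 (\<lambda>\<omega>. trm (H (Z t \<omega>)) S)" for t S
    by (rule PP.integrable_const_bound[where B="G2 * norm S"])
       (use trmb meas2[OF cont_trm[OF HZc]] in auto)
  have E1: "(\<integral>\<omega>. g (Z t \<omega>) \<bullet> (A1 *v fst \<omega>) \<partial>N2) = cos t * (\<integral>\<omega>. trm (H (Z t \<omega>)) S1 \<partial>N2)" for t
  proof -
    have "(\<integral>\<omega>. g (Z t \<omega>) \<bullet> (A1 *v fst \<omega>) \<partial>N2)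
        = (\<integral>y. (\<integral>x. g (Z t (x, y)) \<bullet> (A1 *v x) \<partial>std_gauss) \<partial>std_gauss)"
      using PP.integral_snd[of "\<lambda>x y. g (Z t (x, y)) \<bullet> (A1 *v x)"] int1[of t] by (simp add: split_beta')
    also have "\<dots> = (\<integral>y. cos t * (\<integral>x. trm (H (Z t (x, y))) S1 \<partial>std_gauss) \<partial>std_gauss)"
    proof (rule Bochner_Integration.integral_cong[OF refl])
      fix y :: "real^'d" assume "y \<in> space std_gauss"
      have e: "Z t (x, y) = (\<mu> + sin t *\<^sub>R (A2 *v y)) + cos t *\<^sub>R (A1 *v x)" for x
        by (simp add: Z_def algebra_simps)
      show "(\<integral>x. g (Z t (x, y)) \<bullet> (A1 *v x) \<partial>std_gauss) = cos t * (\<integral>x. trm (H (Z t (x, y))) S1 \<partial>std_gauss)"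
        unfolding e S1_def by (rule stein_mat[OF gder Hc gb Hb])
    qed
    also have "\<dots> = cos t * (\<integral>y. (\<integral>x. trm (H (Z t (x, y))) S1 \<partial>std_gauss) \<partial>std_gauss)" by simp
    also have "(\<integral>y. (\<integral>x. trm (H (Z t (x, y))) S1 \<partial>std_gauss) \<partial>std_gauss) = (\<integral>\<omega>. trm (H (Z t \<omega>)) S1 \<partial>N2)"
      using PP.integral_snd[of "\<lambda>x y. trm (H (Z t (x, y))) S1"] inttrm[of t S1] by (simp add: split_beta')
    finally show ?thesis .
  qed
  have E2: "(\<integral>\<omega>. g (Z t \<omega>) \<bullet> (A2 *v snd \<omega>) \<partial>N2) = sin t * (\<integral>\<omega>. trm (H (Z t \<omega>)) S2 \<partial>N2)" for t
  proof -
    have "(\<integral>\<omega>. g (Z t \<omega>) \<bullet> (A2 *v snd \<omega>) \<partial>N2)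
        = (\<integral>x. (\<integral>y. g (Z t (x, y)) \<bullet> (A2 *v y) \<partial>std_gauss) \<partial>std_gauss)"
      using PP.integral_fst[of "\<lambda>x y. g (Z t (x, y)) \<bullet> (A2 *v y)"] int2[of t] by (simp add: split_beta')
    also have "\<dots> = (\<integral>x. sin t * (\<integral>y. trm (H (Z t (x, y))) S2 \<partial>std_gauss) \<partial>std_gauss)"
    proof (rule Bochner_Integration.integral_cong[OF refl])
      fix x :: "real^'d" assume "x \<in> space std_gauss"
      have e: "Z t (x, y) = (\<mu> + cos t *\<^sub>R (A1 *v x)) + sin t *\<^sub>R (A2 *v y)" for y
        by (simp add: Z_def)
      show "(\<integral>y. g (Z t (x, y)) \<bullet> (A2 *v y) \<partial>std_gauss) = sin t * (\<integral>y. trm (H (Z t (x, y))) S2 \<partial>std_gauss)"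
        unfolding e S2_def by (rule stein_mat[OF gder Hc gb Hb])
    qed
    also have "\<dots> = sin t * (\<integral>x. (\<integral>y. trm (H (Z t (x, y))) S2 \<partial>std_gauss) \<partial>std_gauss)" by simp
    also have "(\<integral>x. (\<integral>y. trm (H (Z t (x, y))) S2 \<partial>std_gauss) \<partial>std_gauss) = (\<integral>\<omega>. trm (H (Z t \<omega>)) S2 \<partial>N2)"
      using PP.integral_fst[of "\<lambda>x y. trm (H (Z t (x, y))) S2"] inttrm[of t S2] by (simp add: split_beta')
    finally show ?thesis .
  qed
  define I where "I t = (\<integral>\<omega>. trm (H (Z t \<omega>)) (S2 - S1) \<partial>N2)" for t
  have dF': "(F has_real_derivative sin t * cos t * I t) (at t)" for t
  proof -
    have "(\<integral>\<omega>. g (Z t \<omega>) \<bullet> W t \<omega> \<partial>N2) = sin t * cos t * ((\<integral>\<omega>. trm (H (Z t \<omega>)) S2 \<partial>N2) - (\<integral>\<omega>. trm (H (Z t \<omega>)) S1 \<partial>N2))"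
      unfolding split E1 E2 by (simp add: algebra_simps)
    also have "(\<integral>\<omega>. trm (H (Z t \<omega>)) S2 \<partial>N2) - (\<integral>\<omega>. trm (H (Z t \<omega>)) S1 \<partial>N2) = I t"
      unfolding I_def trm_diff using inttrm[of t S2] inttrm[of t S1] by simp
    finally show ?thesis using dF[of t] by simp
  qed
  define K where "K = G2 * norm (S2 - S1)"
  have probN2: "prob_space (N2 :: ((real^'d) \<times> (real^'d)) measure)" by (rule PP.prob_space_axioms)
  have Ib: "\<bar>I t\<bar> \<le> K" for t
    unfolding I_def K_def by (rule abs_int_le[OF probN2 meas2[OF cont_trm[OF HZc]] trmb])
  have mono1: "K / 2 * (sin 0)\<^sup>2 - F 0 \<le> K / 2 * (sin (pi/2))\<^sup>2 - F (pi/2)"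
  proof (rule DERIV_nonneg_imp_nondecreasing[of 0 "pi/2"])
    fix t :: real assume t: "0 \<le> t" "t \<le> pi/2"
    have sc: "0 \<le> sin t * cos t" using t by (intro mult_nonneg_nonneg sin_ge_zero cos_ge_zero) auto
    have "((\<lambda>t. K / 2 * (sin t)\<^sup>2 - F t) has_real_derivative (K * (sin t * cos t) - sin t * cos t * I t)) (at t)"
      by (auto intro!: derivative_eq_intros dF' simp: power2_eq_square algebra_simps)
    moreover have "0 \<le> K * (sin t * cos t) - sin t * cos t * I t"
    proof -
      have "I t \<le> K" using Ib[of t] by linarith
      from mult_right_mono[OF this sc] show ?thesis by (simp add: algebra_simps)
    qed
    ultimately show "\<exists>y. ((\<lambda>t. K / 2 * (sin t)\<^sup>2 - F t) has_real_derivative y) (at t) \<and> 0 \<le> y" by blast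
  qed simp
  have mono2: "K / 2 * (sin 0)\<^sup>2 + F 0 \<le> K / 2 * (sin (pi/2))\<^sup>2 + F (pi/2)"
  proof (rule DERIV_nonneg_imp_nondecreasing[of 0 "pi/2"])
    fix t :: real assume t: "0 \<le> t" "t \<le> pi/2"
    have sc: "0 \<le> sin t * cos t" using t by (intro mult_nonneg_nonneg sin_ge_zero cos_ge_zero) auto
    have "((\<lambda>t. K / 2 * (sin t)\<^sup>2 + F t) has_real_derivative (K * (sin t * cos t) + sin t * cos t * I t)) (at t)"
      by (auto intro!: derivative_eq_intros dF' simp: power2_eq_square algebra_simps)
    moreover have "0 \<le> K * (sin t * cos t) + sin t * cos t * I t"
    proof -
      have "- I t \<le> K" using Ib[of t] by linarith
      from mult_right_mono[OF this sc] show ?thesis by (simp add: algebra_simps)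
    qed
    ultimately show "\<exists>y. ((\<lambda>t. K / 2 * (sin t)\<^sup>2 + F t) has_real_derivative y) (at t) \<and> 0 \<le> y" by blast
  qed simp
  have c1: "continuous_on UNIV (\<lambda>x. f (\<mu> + A1 *v x))"
    by (rule continuous_on_compose2[OF fc]) (auto intro!: continuous_intros)
  have int_h1: "integrable std_gauss (\<lambda>x. f (\<mu> + A1 *v x))"
    by (rule N.integrable_const_bound[where B=M0]) (use fb cont_meas_gauss[OF c1] in auto)
  have c2: "continuous_on UNIV (\<lambda>x. f (\<mu> + A2 *v x))"
    by (rule continuous_on_compose2[OF fc]) (auto intro!: continuous_intros)
  have int_h2: "integrable std_gauss (\<lambda>x. f (\<mu> + A2 *v x))"
    by (rule N.integrable_const_bound[where B=M0]) (use fb cont_meas_gauss[OF c2] in auto)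
  have F0: "F 0 = (\<integral>z. f (\<mu> + A1 *v z) \<partial>std_gauss)"
    unfolding F_def Z_def using N2_fst(2)[OF int_h1] by simp
  have Fpi: "F (pi/2) = (\<integral>z. f (\<mu> + A2 *v z) \<partial>std_gauss)"
    unfolding F_def Z_def using N2_snd(2)[OF int_h2] by simp
  have "F 0 - F (pi/2) \<le> K / 2" "- (F 0 - F (pi/2)) \<le> K / 2" using mono1 mono2 by simp_all
  then have "\<bar>F 0 - F (pi/2)\<bar> \<le> K / 2" by (rule abs_leI)
  then show ?thesis unfolding F0 Fpi K_def S1_def S2_def by (simp add: norm_minus_commute)
qed




lemma cont_meas_gauss': "continuous_on UNIV h \<Longrightarrow> (h::real^'d::finite \<Rightarrow> 'b::topological_space) \<in> borel_measurable std_gauss"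
  using borel_measurable_continuous_onI[of h] by (simp add: measurable_cong_sets[OF sets_std_gauss refl])

lemma f_lip:
  fixes f :: "real^'d::finite \<Rightarrow> real"
  assumes fder: "\<And>\<xi>. (f has_derivative (\<lambda>h. g \<xi> \<bullet> h)) (at \<xi>)" and gb: "\<And>\<xi>. norm (g \<xi>) \<le> G1"
  shows "\<bar>f a - f b\<bar> \<le> G1 * norm (a - b)"
proof -
  define \<phi> where "\<phi> t = f (b + t *\<^sub>R (a - b))" for t
  have d: "(\<phi> has_real_derivative g (b + t *\<^sub>R (a - b)) \<bullet> (a - b)) (at t)" for t
  proof -
    have l: "((\<lambda>t. b + t *\<^sub>R (a - b)) has_derivative (\<lambda>h. h *\<^sub>R (a - b))) (at t)"
      by (auto intro!: derivative_eq_intros)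
    show ?thesis unfolding has_field_derivative_def \<phi>_def
      by (rule has_derivative_eq_rhs[OF has_derivative_compose[OF l fder]]) (simp add: fun_eq_iff mult.commute)
  qed
  have b: "\<bar>g (b + t *\<^sub>R (a - b)) \<bullet> (a - b)\<bar> \<le> G1 * norm (a - b)" for t
    using Cauchy_Schwarz_ineq2[of "g (b + t *\<^sub>R (a - b))" "a - b"] gb[of "b + t *\<^sub>R (a - b)"]
    by (meson mult_right_mono norm_ge_zero order_trans)
  have "\<bar>\<phi> 1 - \<phi> 0\<bar> \<le> \<bar>1 - 0\<bar> * (G1 * norm (a - b))"
    by (rule mvt_bound[of 0 2 \<phi>]) (use d b in auto)
  then show ?thesis by (simp add: \<phi>_def)
qed

lemma mu_lip:
  fixes f :: "real^'d::finite \<Rightarrow> real" and A :: "real^'d^'d"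
  assumes fder: "\<And>\<xi>. (f has_derivative (\<lambda>h. g \<xi> \<bullet> h)) (at \<xi>)" and gb: "\<And>\<xi>. norm (g \<xi>) \<le> G1"
    and fb: "\<And>\<xi>. \<bar>f \<xi>\<bar> \<le> M0"
  shows "\<bar>(\<integral>z. f (\<mu>1 + A *v z) \<partial>std_gauss) - (\<integral>z. f (\<mu>2 + A *v z) \<partial>std_gauss)\<bar> \<le> G1 * norm (\<mu>1 - \<mu>2)"
proof -
  interpret N: prob_space "std_gauss :: (real^'d) measure" by (rule prob_std_gauss)
  have fc: "continuous_on UNIV f"
    by (rule has_derivative_continuous_on[of _ _ "\<lambda>\<xi> h. g \<xi> \<bullet> h"]) (use fder in auto)
  have c: "continuous_on UNIV (\<lambda>x. f (m + A *v x))" for m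
    by (rule continuous_on_compose2[OF fc]) (auto intro!: continuous_intros)
  have i: "integrable std_gauss (\<lambda>x. f (m + A *v x))" for m
    by (rule N.integrable_const_bound[where B=M0]) (use fb cont_meas_gauss[OF c] in auto)
  have "(\<integral>z. f (\<mu>1 + A *v z) \<partial>std_gauss) - (\<integral>z. f (\<mu>2 + A *v z) \<partial>std_gauss)
      = (\<integral>z. f (\<mu>1 + A *v z) - f (\<mu>2 + A *v z) \<partial>std_gauss)"
    using i[of \<mu>1] i[of \<mu>2] by simp
  also have "\<bar>\<dots>\<bar> \<le> G1 * norm (\<mu>1 - \<mu>2)"
  proof (rule abs_int_le[OF prob_std_gauss])
    show "(\<lambda>z. f (\<mu>1 + A *v z) - f (\<mu>2 + A *v z)) \<in> borel_measurable std_gauss"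
      using cont_meas_gauss[OF c] by measurable
    show "\<bar>f (\<mu>1 + A *v z) - f (\<mu>2 + A *v z)\<bar> \<le> G1 * norm (\<mu>1 - \<mu>2)" for z
      using f_lip[OF fder gb, of "\<mu>1 + A *v z" "\<mu>2 + A *v z"] by simp
  qed
  finally show ?thesis .
qed

lemma qmix_repr:
  fixes p :: "real^'d::finite \<Rightarrow> 's \<Rightarrow> 'act \<Rightarrow> 's \<Rightarrow> real"
  assumes "continuous_on UNIV (\<lambda>\<xi>. p \<xi> s a s')"
  shows "qmix p (\<mu>, Sig) s a s' = (\<integral>z. p (\<mu> + (SOME A::real^'d^'d. A ** transpose A = Sig) *v z) s a s' \<partial>std_gauss)"
proof -
  let ?A = "SOME A::real^'d^'d. A ** transpose A = Sig"
  have m: "(\<lambda>z. \<mu> + ?A *v z) \<in> measurable std_gauss borel"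
    by (rule cont_meas_gauss') (intro continuous_intros)
  have pm: "(\<lambda>\<xi>. p \<xi> s a s') \<in> borel_measurable borel"
    by (rule borel_measurable_continuous_onI[OF assms])
  show ?thesis
    unfolding qmix_def gauss_def fst_conv snd_conv
    by (rule integral_distr[OF m pm])
qed

lemma ln_lip:
  fixes a b c :: real
  assumes "c > 0" "a \<ge> c" "b \<ge> c"
  shows "\<bar>ln a - ln b\<bar> \<le> \<bar>a - b\<bar> / c"
proof -
  have main: "\<bar>ln x - ln y\<bar> \<le> \<bar>x - y\<bar> / c" if "x \<ge> c" "y \<ge> c" "y \<le> x" for x y
  proof -
    have xy: "x > 0" "y > 0" using that assms by auto
    have "ln x - ln y = ln (x / y)" using xy by (simp add: ln_div)
    also have "\<dots> \<le> x / y - 1" using xy by (intro ln_le_minus_one) simp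
    also have "\<dots> = (x - y) / y" using xy by (simp add: field_simps)
    also have "\<dots> \<le> (x - y) / c" using that assms by (intro divide_left_mono) auto
    finally have "ln x - ln y \<le> (x - y) / c" .
    moreover have "ln y \<le> ln x" using xy that by simp
    ultimately show ?thesis using that by simp
  qed
  show ?thesis
  proof (cases "b \<le> a")
    case True then show ?thesis using main[OF assms(2,3)] by simp
  next
    case False then show ?thesis using main[OF assms(3,2)] by (simp add: abs_minus_commute)
  qed
qed




theorem lemma6:
  fixes lam :: "'s measure"
    and p :: "real^'d::finite \<Rightarrow> 's \<Rightarrow> 'act \<Rightarrow> 's \<Rightarrow> real"
    and D :: "('s \<times> 'act \<times> 's) set"
    and Xi :: "(real^'d) set"
    and M smax c G1 G2 :: real
  assumes sigma_fin: "sigma_finite_measure lam"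
    and kernel_meas: "\<And>xi s a. s \<in> space lam \<Longrightarrow> (\<lambda>s'. p xi s a s') \<in> borel_measurable lam"
    and kernel_prob: "\<And>xi s a. s \<in> space lam \<Longrightarrow>
          (\<integral>\<^sup>+ s'. ennreal (p xi s a s') \<partial>lam) = 1"
    and p_bounds: "\<And>xi s a s'. s \<in> space lam \<Longrightarrow> s' \<in> space lam \<Longrightarrow>
          0 \<le> p xi s a s' \<and> p xi s a s' \<le> M"
    and Xi_compact: "compact Xi"
    and data: "D \<subseteq> space lam \<times> UNIV \<times> space lam"
    and c_pos: "c > 0"
    and q_lower: "\<And>s a s' phi. (s, a, s') \<in> D \<Longrightarrow> phi \<in> Phi Xi smax \<Longrightarrow>
          qmix p phi s a s' \<ge> c"
    and G_pos: "G1 > 0" "G2 > 0"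
    and smooth: "\<And>s a s'. s \<in> space lam \<Longrightarrow> s' \<in> space lam \<Longrightarrow>
          \<exists>g H. (\<forall>xi. ((\<lambda>z. p z s a s') has_derivative (\<lambda>h. g xi \<bullet> h)) (at xi))
              \<and> (\<forall>xi. (g has_derivative (\<lambda>h. H xi *v h)) (at xi))
              \<and> continuous_on UNIV H
              \<and> (\<forall>xi. norm (g xi) \<le> G1 \<and> norm (H xi) \<le> G2)"
  shows "\<forall>x\<in>D. \<forall>phi\<in>Phi Xi smax. \<forall>psi\<in>Phi Xi smax.
           \<bar>loglik p x phi - loglik p x psi\<bar> \<le> (G1 + G2 / 2) / c * norm (phi - psi)"
proof (intro ballI)
  fix x phi psi
  assume xD: "x \<in> D" and phi: "phi \<in> Phi Xi smax" and psi: "psi \<in> Phi Xi smax"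
  obtain s a s' where x: "x = (s, a, s')" by (cases x) auto
  have ss: "s \<in> space lam" "s' \<in> space lam" using data xD x by auto
  obtain g H where fder: "\<And>xi. ((\<lambda>z. p z s a s') has_derivative (\<lambda>h. g xi \<bullet> h)) (at xi)"
    and gder: "\<And>xi. (g has_derivative (\<lambda>h. H xi *v h)) (at xi)"
    and Hc: "continuous_on UNIV H"
    and gb: "\<And>xi. norm (g xi) \<le> G1" and Hb: "\<And>xi. norm (H xi) \<le> G2"
    using smooth[OF ss] by blast
  have fb: "\<bar>p xi s a s'\<bar> \<le> M" for xi using p_bounds[OF ss, of xi a] by auto
  have fc: "continuous_on UNIV (\<lambda>z. p z s a s')"
    by (rule has_derivative_continuous_on[of _ _ "\<lambda>\<xi> h. g \<xi> \<bullet> h"]) (use fder in auto)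
  obtain \<mu>1 S1 where phi_eq: "phi = (\<mu>1, S1)" by (cases phi)
  obtain \<mu>2 S2 where psi_eq: "psi = (\<mu>2, S2)" by (cases psi)
  have P1: "transpose S1 = S1" "\<forall>v. 0 \<le> v \<bullet> (S1 *v v)" using phi phi_eq by (auto simp: Phi_def)
  have P2: "transpose S2 = S2" "\<forall>v. 0 \<le> v \<bullet> (S2 *v v)" using psi psi_eq by (auto simp: Phi_def)
  define A1 where "A1 = (SOME A::real^'d^'d. A ** transpose A = S1)"
  define A2 where "A2 = (SOME A::real^'d^'d. A ** transpose A = S2)"
  have A1: "A1 ** transpose A1 = S1" unfolding A1_def by (rule someI_ex[OF sqrt_exists[OF P1]])
  have A2: "A2 ** transpose A2 = S2" unfolding A2_def by (rule someI_ex[OF sqrt_exists[OF P2]])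
  define q1 where "q1 = qmix p phi s a s'"
  define q2 where "q2 = qmix p psi s a s'"
  have q1e: "q1 = (\<integral>z. p (\<mu>1 + A1 *v z) s a s' \<partial>std_gauss)"
    unfolding q1_def phi_eq A1_def by (rule qmix_repr[of p s a s', OF fc])
  have q2e: "q2 = (\<integral>z. p (\<mu>2 + A2 *v z) s a s' \<partial>std_gauss)"
    unfolding q2_def psi_eq A2_def by (rule qmix_repr[of p s a s', OF fc])
  have m: "\<bar>(\<integral>z. p (\<mu>1 + A1 *v z) s a s' \<partial>std_gauss) - (\<integral>z. p (\<mu>2 + A1 *v z) s a s' \<partial>std_gauss)\<bar>
      \<le> G1 * norm (\<mu>1 - \<mu>2)"
    by (rule mu_lip[of "\<lambda>z. p z s a s'", OF fder gb fb])
  have sg: "\<bar>(\<integral>z. p (\<mu>2 + A1 *v z) s a s' \<partial>std_gauss) - (\<integral>z. p (\<mu>2 + A2 *v z) s a s' \<partial>std_gauss)\<bar>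
      \<le> G2 / 2 * norm (A1 ** transpose A1 - A2 ** transpose A2)"
    by (rule sigma_lip[of "\<lambda>z. p z s a s'", OF fder gder Hc gb Hb fb])
  have qd: "\<bar>q1 - q2\<bar> \<le> G1 * norm (\<mu>1 - \<mu>2) + G2 / 2 * norm (S1 - S2)"
    using m sg unfolding q1e q2e A1 A2 by linarith
  define n where "n = norm (phi - psi)"
  have n1: "norm (\<mu>1 - \<mu>2) \<le> n" unfolding n_def phi_eq psi_eq
    using norm_fst_le[of "\<mu>1 - \<mu>2" "S1 - S2"] by simp
  have n2: "norm (S1 - S2) \<le> n" unfolding n_def phi_eq psi_eq
    using norm_snd_le[of "S1 - S2" "\<mu>1 - \<mu>2"] by simp
  have "G1 * norm (\<mu>1 - \<mu>2) + G2 / 2 * norm (S1 - S2) \<le> G1 * n + G2 / 2 * n"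
    using n1 n2 G_pos by (intro add_mono mult_left_mono) auto
  then have qd': "\<bar>q1 - q2\<bar> \<le> (G1 + G2 / 2) * n" using qd by (simp add: algebra_simps)
  have c1: "q1 \<ge> c" unfolding q1_def using q_lower[of s a s' phi] xD x phi by simp
  have c2: "q2 \<ge> c" unfolding q2_def using q_lower[of s a s' psi] xD x psi by simp
  have "\<bar>ln q1 - ln q2\<bar> \<le> \<bar>q1 - q2\<bar> / c" by (rule ln_lip[OF c_pos c1 c2])
  also have "\<dots> \<le> (G1 + G2 / 2) * n / c" using qd' c_pos by (intro divide_right_mono) auto
  finally show "\<bar>loglik p x phi - loglik p x psi\<bar> \<le> (G1 + G2 / 2) / c * norm (phi - psi)"
    by (simp add: loglik_def x q1_def q2_def n_def)
qed



end
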